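(* Let $T>0$ and let $\Gamma$ satisfy Assumption (A). Let $v\in\mathbb{R}^d$, $F\in C([0,T],\mathbb{R}^d)$, $G\in C([0,T],\mathcal{M}_d(\mathbb{R}))$ with $v_i\ge0$, $F_i\ge0$ and $G_{ij}\ge0$ for all $i,j\in\{1,\dots,d\}$ with $i\ne j$. Then the linear Volterra equation $\chi(t)=v+\int_0^t\Gamma(t,s)\big(F(s)+G(s)\chi(s)\big)\mathrm{d}s$ has a unique solution $\chi\in C([0,T],\mathbb{R}^d)$, and $\chi_i\ge0$ for $i=1,\dots,d$.
   Context: $\Delta=\{(t,s):0\le s\le t\}$, $\Delta_T=\{(t,s):0\le s\le t\le T\}$. Condition (K): for every $T$ there exist $\eta>0$, $\gamma\in(0,1/2]$ with $\int_s^t\Gamma(t,u)^2\mathrm{d}u+\int_0^s(\Gamma(t,u)-\Gamma(s,u))^2\mathrm{d}u\le\eta(t-s)^{2\gamma}$ on $\Delta_T$. A kernel preserves nonnegativity if for every $T$, $K$, $x_1,\dots,x_K\in\mathbb{R}$, $0\le t_1<\dots<t_K<T$ with $\sum_{k'\le k}x_{k'}\Gamma(t_k,t_{k'})\ge0$ for all $k$, one has $\sum_{k:t_k\le t}x_k\Gamma(t,t_k)\ge0$ for $t\in[0,T]$. Condition (P): $\Gamma:\Delta\to\mathbb{R}_+$ continuous, $0<\Gamma(s,s)<\infty$, preserves nonnegativity, $t\mapsto\Gamma(t,s)$ nonincreasing on $[s,\infty)$. Assumption (A): $\Gamma:\Delta\to\mathbb{R}_+$ satisfies (K) and there exist kernels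 $\Gamma_M$ satisfying (P) with $\int_0^t(\Gamma(t,s)-\Gamma_M(t,s))^2\mathrm{d}s\to0$ for all $t$ and, for each $T$, $\eta>0,\gamma\in(0,1/2]$ with $\int_s^t\Gamma_M(t,u)^2\mathrm{d}u+\int_0^s(\Gamma_M(t,u)-\Gamma_M(s,u))^2\mathrm{d}u\le\eta|t-s|^{2\gamma}$ on $\Delta_T$ for all $M$. *)

theory Defs
  imports "HOL-Analysis.Analysis"
begin

text \<open>Kernels are functions \<open>\<Gamma> :: real \<Rightarrow> real \<Rightarrow> real\<close>; only the values on
  \<open>\<Delta> = {(t,s). 0 \<le> s \<and> s \<le> t}\<close> matter.\<close>

definition Delta :: "(real \<times> real) set" where
  "Delta = {(t, s). 0 \<le> s \<and> s \<le> t}"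

definition cond_K :: "(real \<Rightarrow> real \<Rightarrow> real) \<Rightarrow> bool" where
  "cond_K \<Gamma> \<longleftrightarrow>
    (\<forall>T. \<exists>\<eta>::real. \<exists>\<gamma>::real. \<eta> > 0 \<and> 0 < \<gamma> \<and> \<gamma> \<le> 1/2 \<and>
      (\<forall>s t. 0 \<le> s \<and> s \<le> t \<and> t \<le> T \<longrightarrow>
         (\<integral>\<^sup>+ u\<in>{s..t}. ennreal ((\<Gamma> t u)\<^sup>2) \<partial>lborel)
       + (\<integral>\<^sup>+ u\<in>{0..s}. ennreal ((\<Gamma> t u - \<Gamma> s u)\<^sup>2) \<partial>lborel)
         \<le> ennreal (\<eta> * (t - s) powr (2 * \<gamma>))))"

definition preserves_nonneg :: "(real \<Rightarrow> real \<Rightarrow> real) \<Rightarrow> bool" where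
  "preserves_nonneg \<Gamma> \<longleftrightarrow>
    (\<forall>T (K::nat) (x::nat \<Rightarrow> real) (tt::nat \<Rightarrow> real).
       (\<forall>k<K. 0 \<le> tt k \<and> tt k < T) \<and> (\<forall>k. Suc k < K \<longrightarrow> tt k < tt (Suc k)) \<and>
       (\<forall>k<K. 0 \<le> (\<Sum>k'\<le>k. x k' * \<Gamma> (tt k) (tt k')))
       \<longrightarrow> (\<forall>t\<in>{0..T}. 0 \<le> (\<Sum>k\<in>{k. k < K \<and> tt k \<le> t}. x k * \<Gamma> t (tt k))))"

definition cond_P :: "(real \<Rightarrow> real \<Rightarrow> real) \<Rightarrow> bool" where
  "cond_P \<Gamma> \<longleftrightarrow>
    continuous_on Delta (\<lambda>(t, s). \<Gamma> t s) \<and>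
    (\<forall>(t, s)\<in>Delta. 0 \<le> \<Gamma> t s) \<and>
    (\<forall>s\<ge>0. 0 < \<Gamma> s s) \<and>
    preserves_nonneg \<Gamma> \<and>
    (\<forall>s t1 t2. 0 \<le> s \<and> s \<le> t1 \<and> t1 \<le> t2 \<longrightarrow> \<Gamma> t2 s \<le> \<Gamma> t1 s)"

text \<open>Assumption (A).  Measurability of \<open>\<Gamma>(t,\<cdot>)\<close> on \<open>[0,t]\<close> is implicit in the paper.\<close>
definition assumption_A :: "(real \<Rightarrow> real \<Rightarrow> real) \<Rightarrow> bool" where
  "assumption_A \<Gamma> \<longleftrightarrow>
    (\<forall>(t, s)\<in>Delta. 0 \<le> \<Gamma> t s) \<and>
    (\<forall>t\<ge>0. set_borel_measurable lborel {0..t} (\<Gamma> t)) \<and>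
    cond_K \<Gamma> \<and>
    (\<exists>\<Gamma>M :: nat \<Rightarrow> real \<Rightarrow> real \<Rightarrow> real.
       (\<forall>M. cond_P (\<Gamma>M M)) \<and>
       (\<forall>t\<ge>0. ((\<lambda>M. \<integral>\<^sup>+ s\<in>{0..t}. ennreal ((\<Gamma> t s - \<Gamma>M M t s)\<^sup>2) \<partial>lborel) \<longlongrightarrow> 0)
                sequentially) \<and>
       (\<forall>T. \<exists>\<eta>::real. \<exists>\<gamma>::real. \<eta> > 0 \<and> 0 < \<gamma> \<and> \<gamma> \<le> 1/2 \<and>
         (\<forall>M s t. 0 \<le> s \<and> s \<le> t \<and> t \<le> T \<longrightarrow>
            (\<integral>\<^sup>+ u\<in>{s..t}. ennreal ((\<Gamma>M M t u)\<^sup>2) \<partial>lborel)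
          + (\<integral>\<^sup>+ u\<in>{0..s}. ennreal ((\<Gamma>M M t u - \<Gamma>M M s u)\<^sup>2) \<partial>lborel)
            \<le> ennreal (\<eta> * \<bar>t - s\<bar> powr (2 * \<gamma>)))))"

definition volterra_solution ::
  "(real \<Rightarrow> real \<Rightarrow> real) \<Rightarrow> real^'d \<Rightarrow> (real \<Rightarrow> real^'d) \<Rightarrow> (real \<Rightarrow> real^'d^'d)
   \<Rightarrow> real \<Rightarrow> (real \<Rightarrow> real^'d) \<Rightarrow> bool" where
  "volterra_solution \<Gamma> v F G T X \<longleftrightarrow>
    (\<forall>t\<in>{0..T}.
       set_integrable lborel {0..t} (\<lambda>s. \<Gamma> t s *\<^sub>R (F s + G s *v X s)) \<and>
       X t = v + (LINT s:{0..t}|lborel. \<Gamma> t s *\<^sub>R (F s + G s *v X s)))"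

end

theory Submission
  imports Defs
begin

definition mnorm :: "real^'n^'m \<Rightarrow> real" where
  "mnorm A = (\<Sum>i\<in>UNIV. \<Sum>j\<in>UNIV. \<bar>A $ i $ j\<bar>)"

lemma mnorm_mult: "norm (A *v x) \<le> mnorm A * norm x"
proof -
  have "norm (A *v x) \<le> (\<Sum>i\<in>UNIV. \<bar>(A *v x) $ i\<bar>)"
    by (rule norm_le_l1_cart)
  also have "\<dots> \<le> (\<Sum>i\<in>UNIV. \<Sum>j\<in>UNIV. \<bar>A $ i $ j\<bar> * norm x)"
  proof (rule sum_mono)
    fix i
    have "\<bar>(A *v x) $ i\<bar> \<le> \<bar>\<Sum>j\<in>UNIV. A $ i $ j * x $ j\<bar>"
      by (simp add: matrix_vector_mult_def)
    also have "\<dots> \<le> (\<Sum>j\<in>UNIV. \<bar>A $ i $ j * x $ j\<bar>)"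
      by (rule sum_abs)
    also have "\<dots> \<le> (\<Sum>j\<in>UNIV. \<bar>A $ i $ j\<bar> * norm x)"
      by (rule sum_mono) (simp add: abs_mult component_le_norm_cart mult_left_mono)
    finally show "\<bar>(A *v x) $ i\<bar> \<le> (\<Sum>j\<in>UNIV. \<bar>A $ i $ j\<bar> * norm x)" .
  qed
  finally show ?thesis
    by (simp add: sum_distrib_right mnorm_def)
qed

lemma mnorm_nonneg: "0 \<le> mnorm A"
  by (simp add: mnorm_def sum_nonneg)

lemma continuous_on_mnorm: "continuous_on S G \<Longrightarrow> continuous_on S (\<lambda>t. mnorm (G t))"
  unfolding mnorm_def by (intro continuous_intros) (auto intro: continuous_on_component)

lemma cont_bound:
  fixes f :: "real \<Rightarrow> 'a::real_normed_vector"
  assumes "continuous_on {a..b} f"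
  obtains B where "B > 0" "\<And>t. t \<in> {a..b} \<Longrightarrow> norm (f t) \<le> B"
proof -
  have "bounded (f ` {a..b})"
    by (intro compact_imp_bounded compact_continuous_image assms) auto
  then obtain B where "B > 0" "\<forall>x\<in>f ` {a..b}. norm x \<le> B"
    using bounded_pos by blast
  then show ?thesis using that by auto
qed

lemma kern_bound:
  fixes g :: "real \<Rightarrow> real" and \<psi> :: "real \<Rightarrow> 'a::euclidean_space"
  assumes gm: "set_borel_measurable lborel {a..b} g"
    and pc: "continuous_on {a..b} \<psi>"
    and gb: "(\<integral>\<^sup>+ u\<in>{a..b}. ennreal ((g u)\<^sup>2) \<partial>lborel) \<le> ennreal P" and P0: "0 \<le> P"
  shows "set_integrable lborel {a..b} (\<lambda>s. g s *\<^sub>R \<psi> s)"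
    "(norm (LINT s:{a..b}|lborel. g s *\<^sub>R \<psi> s))\<^sup>2 \<le> P * integral {a..b} (\<lambda>s. (norm (\<psi> s))\<^sup>2)"
proof -
  let ?A = "{a..b}"
  define ig where "ig x = indicator ?A x *\<^sub>R g x" for x
  define ip where "ip x = indicator ?A x *\<^sub>R \<psi> x" for x
  have igm: "ig \<in> borel_measurable lborel" using gm unfolding ig_def set_borel_measurable_def .
  have ipm: "ip \<in> borel_measurable lborel"
    unfolding ip_def using borel_measurable_continuous_on_indicator[OF _ pc] by simp
  have eq: "indicator ?A x *\<^sub>R (g x *\<^sub>R \<psi> x) = ig x *\<^sub>R ip x" for x
    by (simp add: ig_def ip_def indicator_def)
  have m: "(\<lambda>x. indicator ?A x *\<^sub>R (g x *\<^sub>R \<psi> x)) \<in> borel_measurable lborel"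
    unfolding eq using igm ipm by measurable
  have pint: "((\<lambda>s. (norm (\<psi> s))\<^sup>2) has_integral integral ?A (\<lambda>s. (norm (\<psi> s))\<^sup>2)) ?A"
    by (intro integrable_integral integrable_continuous_interval continuous_intros pc)
  have Q: "(\<integral>\<^sup>+x. ennreal (norm (ip x)) ^ 2 \<partial>lborel) = ennreal (integral ?A (\<lambda>s. (norm (\<psi> s))\<^sup>2))"
  proof -
    have "(\<integral>\<^sup>+x. ennreal (norm (ip x)) ^ 2 \<partial>lborel) = (\<integral>\<^sup>+x. ennreal (indicator ?A x * (norm (\<psi> x))\<^sup>2) \<partial>lborel)"
      by (intro nn_integral_cong) (auto simp: ip_def indicator_def ennreal_power)
    also have "\<dots> = ennreal (integral ?A (\<lambda>s. (norm (\<psi> s))\<^sup>2))"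
      using nn_integral_has_integral_lebesgue[OF _ pint] by simp
    finally show ?thesis .
  qed
  have Pg: "(\<integral>\<^sup>+x. ennreal (norm (ig x)) ^ 2 \<partial>lborel) \<le> ennreal P"
  proof -
    have "(\<integral>\<^sup>+x. ennreal (norm (ig x)) ^ 2 \<partial>lborel) = (\<integral>\<^sup>+ u\<in>{a..b}. ennreal ((g u)\<^sup>2) \<partial>lborel)"
      by (intro nn_integral_cong) (auto simp: ig_def indicator_def ennreal_power)
    then show ?thesis using gb by simp
  qed
  have nrm: "(\<integral>\<^sup>+x. ennreal (norm (indicator ?A x *\<^sub>R (g x *\<^sub>R \<psi> x))) \<partial>lborel)
      = (\<integral>\<^sup>+x. ennreal (norm (ig x)) * ennreal (norm (ip x)) \<partial>lborel)"
    by (intro nn_integral_cong) (auto simp: ig_def ip_def indicator_def ennreal_mult)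
  have CS: "(\<integral>\<^sup>+x. ennreal (norm (ig x)) * ennreal (norm (ip x)) \<partial>lborel)\<^sup>2
     \<le> ennreal P * ennreal (integral ?A (\<lambda>s. (norm (\<psi> s))\<^sup>2))"
  proof -
    have "(\<integral>\<^sup>+x. ennreal (norm (ig x)) * ennreal (norm (ip x)) \<partial>lborel)\<^sup>2
        \<le> (\<integral>\<^sup>+x. ennreal (norm (ig x)) ^ 2 \<partial>lborel) * (\<integral>\<^sup>+x. ennreal (norm (ip x)) ^ 2 \<partial>lborel)"
      by (rule Cauchy_Schwarz_nn_integral) (use igm ipm in measurable)
    also have "\<dots> \<le> ennreal P * ennreal (integral ?A (\<lambda>s. (norm (\<psi> s))\<^sup>2))"
      unfolding Q by (intro mult_right_mono Pg) auto
    finally show ?thesis .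
  qed
  have fin: "(\<integral>\<^sup>+x. ennreal (norm (indicator ?A x *\<^sub>R (g x *\<^sub>R \<psi> x))) \<partial>lborel) < \<infinity>"
  proof -
    have "(\<integral>\<^sup>+x. ennreal (norm (ig x)) * ennreal (norm (ip x)) \<partial>lborel)\<^sup>2 < \<infinity>"
      using CS by (rule le_less_trans) (simp add: ennreal_mult_less_top)
    then show ?thesis unfolding nrm by (simp add: power_less_top_ennreal)
  qed
  show si: "set_integrable lborel {a..b} (\<lambda>s. g s *\<^sub>R \<psi> s)"
    unfolding set_integrable_def by (rule integrableI_bounded[OF m fin])
  have "ennreal (norm (LINT s:{a..b}|lborel. g s *\<^sub>R \<psi> s))
      \<le> (\<integral>\<^sup>+x. ennreal (norm (ig x)) * ennreal (norm (ip x)) \<partial>lborel)"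
    unfolding set_lebesgue_integral_def nrm[symmetric]
    by (rule integral_norm_bound_ennreal) (use si in \<open>simp add: set_integrable_def\<close>)
  then have "(ennreal (norm (LINT s:{a..b}|lborel. g s *\<^sub>R \<psi> s)))\<^sup>2
      \<le> (\<integral>\<^sup>+x. ennreal (norm (ig x)) * ennreal (norm (ip x)) \<partial>lborel)\<^sup>2"
    by (intro power_mono) auto
  also note CS
  moreover have I0: "0 \<le> integral ?A (\<lambda>s. (norm (\<psi> s))\<^sup>2)"
    using pint by (intro integral_nonneg) (auto simp: integrable_on_def)
  ultimately have "ennreal ((norm (LINT s:{a..b}|lborel. g s *\<^sub>R \<psi> s))\<^sup>2) \<le> ennreal (P * integral ?A (\<lambda>s. (norm (\<psi> s))\<^sup>2))"
    using P0 by (simp add: ennreal_power ennreal_mult)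
  then show "(norm (LINT s:{a..b}|lborel. g s *\<^sub>R \<psi> s))\<^sup>2 \<le> P * integral {a..b} (\<lambda>s. (norm (\<psi> s))\<^sup>2)"
    using P0 I0 by (simp add: ennreal_le_iff)
qed

definition goodK :: "(real \<Rightarrow> real \<Rightarrow> real) \<Rightarrow> real \<Rightarrow> real \<Rightarrow> real \<Rightarrow> bool" where
  "goodK \<Gamma> T \<eta> \<gamma> \<longleftrightarrow> \<eta> > 0 \<and> \<gamma> > 0 \<and>
     (\<forall>t\<in>{0..T}. set_borel_measurable lborel {0..t} (\<Gamma> t)) \<and>
     (\<forall>s t. 0 \<le> s \<and> s \<le> t \<and> t \<le> T \<longrightarrow>
         (\<integral>\<^sup>+ u\<in>{s..t}. ennreal ((\<Gamma> t u)\<^sup>2) \<partial>lborel)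
       + (\<integral>\<^sup>+ u\<in>{0..s}. ennreal ((\<Gamma> t u - \<Gamma> s u)\<^sup>2) \<partial>lborel)
         \<le> ennreal (\<eta> * (t - s) powr (2 * \<gamma>)))"

definition VI :: "(real \<Rightarrow> real \<Rightarrow> real) \<Rightarrow> (real \<Rightarrow> 'a::euclidean_space) \<Rightarrow> real \<Rightarrow> 'a" where
  "VI \<Gamma> \<phi> t = (LINT s:{0..t}|lborel. \<Gamma> t s *\<^sub>R \<phi> s)"

lemma goodK_g1:
  assumes "goodK \<Gamma> T \<eta> \<gamma>" "0 \<le> s" "s \<le> t" "t \<le> T"
  shows "(\<integral>\<^sup>+ u\<in>{s..t}. ennreal ((\<Gamma> t u)\<^sup>2) \<partial>lborel) \<le> ennreal (\<eta> * (t - s) powr (2 * \<gamma>))"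
  using assms unfolding goodK_def by (meson add_increasing2 order_trans zero_le order_refl)

lemma goodK_g2:
  assumes "goodK \<Gamma> T \<eta> \<gamma>" "0 \<le> s" "s \<le> t" "t \<le> T"
  shows "(\<integral>\<^sup>+ u\<in>{0..s}. ennreal ((\<Gamma> t u - \<Gamma> s u)\<^sup>2) \<partial>lborel) \<le> ennreal (\<eta> * (t - s) powr (2 * \<gamma>))"
  using assms unfolding goodK_def by (meson add_increasing order_trans zero_le order_refl)

lemma goodK_pos: "goodK \<Gamma> T \<eta> \<gamma> \<Longrightarrow> \<eta> > 0 \<and> \<gamma> > 0"
  unfolding goodK_def by auto

lemma goodK_meas:
  assumes "goodK \<Gamma> T \<eta> \<gamma>" "0 \<le> s" "s \<le> t" "t \<le> T" "0 \<le> r"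
  shows "set_borel_measurable lborel {r..s} (\<Gamma> t)"
proof -
  have "set_borel_measurable lborel {0..t} (\<Gamma> t)" using assms unfolding goodK_def by auto
  then show ?thesis by (rule set_borel_measurable_subset) (use assms in auto)
qed

lemma goodK_meas_diff:
  assumes "goodK \<Gamma> T \<eta> \<gamma>" "0 \<le> s" "s \<le> t" "t \<le> T"
  shows "set_borel_measurable lborel {0..s} (\<lambda>u. \<Gamma> t u - \<Gamma> s u)"
proof -
  have a: "set_borel_measurable lborel {0..s} (\<Gamma> t)" using goodK_meas[OF assms order_refl] by simp
  have b: "set_borel_measurable lborel {0..s} (\<Gamma> s)" using goodK_meas[OF assms(1,2) order_refl _ order_refl] assms by simp
  have e: "(\<lambda>x. indicator {0..s} x *\<^sub>R (\<Gamma> t x - \<Gamma> s x)) = (\<lambda>x. indicator {0..s} x *\<^sub>R \<Gamma> t x - indicator {0..s} x *\<^sub>R \<Gamma> s x)"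
    by (auto simp: algebra_simps)
  show ?thesis using a b unfolding set_borel_measurable_def e by measurable
qed

lemma integral_sq_bound:
  fixes \<phi> :: "real \<Rightarrow> 'a::euclidean_space"
  assumes "continuous_on {a..b} \<phi>" "\<And>s. s \<in> {a..b} \<Longrightarrow> norm (\<phi> s) \<le> B" "a \<le> b"
  shows "integral {a..b} (\<lambda>s. (norm (\<phi> s))\<^sup>2) \<le> (b - a) * B\<^sup>2"
proof -
  have "integral {a..b} (\<lambda>s. (norm (\<phi> s))\<^sup>2) \<le> integral {a..b} (\<lambda>s. B\<^sup>2)"
    by (intro integral_le integrable_continuous_interval continuous_intros assms)
       (auto intro!: power_mono assms)
  then show ?thesis using assms by simp
qed

lemma VI_bound:
  fixes \<phi> :: "real \<Rightarrow> 'a::euclidean_space"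
  assumes K: "goodK \<Gamma> T \<eta> \<gamma>" and c: "continuous_on {0..t} \<phi>" and t: "0 \<le> t" "t \<le> T"
  shows "set_integrable lborel {0..t} (\<lambda>s. \<Gamma> t s *\<^sub>R \<phi> s)"
    "(norm (VI \<Gamma> \<phi> t))\<^sup>2 \<le> (\<eta> * T powr (2 * \<gamma>)) * integral {0..t} (\<lambda>s. (norm (\<phi> s))\<^sup>2)"
proof -
  have g: "(\<integral>\<^sup>+ u\<in>{0..t}. ennreal ((\<Gamma> t u)\<^sup>2) \<partial>lborel) \<le> ennreal (\<eta> * (t - 0) powr (2 * \<gamma>))"
    by (rule goodK_g1[OF K]) (use t in auto)
  have "\<eta> * t powr (2 * \<gamma>) \<le> \<eta> * T powr (2 * \<gamma>)"
    using goodK_pos[OF K] t by (intro mult_left_mono powr_mono2) auto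
  then have g': "(\<integral>\<^sup>+ u\<in>{0..t}. ennreal ((\<Gamma> t u)\<^sup>2) \<partial>lborel) \<le> ennreal (\<eta> * T powr (2 * \<gamma>))"
    using g order_trans[OF _ ennreal_leI] by fastforce
  have m: "set_borel_measurable lborel {0..t} (\<Gamma> t)"
    using goodK_meas[OF K t(1) order_refl t(2) order_refl] .
  have P0: "0 \<le> \<eta> * T powr (2 * \<gamma>)" using goodK_pos[OF K] by simp
  show "set_integrable lborel {0..t} (\<lambda>s. \<Gamma> t s *\<^sub>R \<phi> s)"
    by (rule kern_bound(1)[OF m c g' P0])
  show "(norm (VI \<Gamma> \<phi> t))\<^sup>2 \<le> (\<eta> * T powr (2 * \<gamma>)) * integral {0..t} (\<lambda>s. (norm (\<phi> s))\<^sup>2)"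
    unfolding VI_def by (rule kern_bound(2)[OF m c g' P0])
qed

lemma cont_modulus:
  fixes f :: "real \<Rightarrow> 'a::metric_space"
  assumes le: "\<And>s t. s \<in> S \<Longrightarrow> t \<in> S \<Longrightarrow> s < t \<Longrightarrow> dist (f t) (f s) \<le> \<omega> (t - s)"
    and lim: "(\<omega> \<longlongrightarrow> 0) (at_right 0)"
  shows "continuous_on S f"
  unfolding continuous_on_iff
proof (intro ballI allI impI)
  fix x e assume x: "x \<in> S" and e: "(0::real) < e"
  have "eventually (\<lambda>y. dist (\<omega> y) 0 < e) (at_right 0)"
    using lim e by (rule tendstoD)
  then obtain b where b: "b > 0" "\<And>y. y > 0 \<Longrightarrow> y < b \<Longrightarrow> dist (\<omega> y) 0 < e"
    unfolding eventually_at_right_field by auto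
  show "\<exists>d>0. \<forall>x'\<in>S. dist x' x < d \<longrightarrow> dist (f x') (f x) < e"
  proof (intro exI[of _ b] conjI ballI impI)
    fix y assume y: "y \<in> S" "dist y x < b"
    consider "y = x" | "x < y" | "y < x" by linarith
    then show "dist (f y) (f x) < e"
    proof cases
      case 1 then show ?thesis using e by simp
    next
      case 2
      have "dist (f y) (f x) \<le> \<omega> (y - x)" by (rule le[OF x y(1) 2])
      also have "\<dots> < e" using b(2)[of "y - x"] 2 y(2) by (auto simp: dist_real_def)
      finally show ?thesis .
    next
      case 3
      have "dist (f y) (f x) \<le> \<omega> (x - y)" by (subst dist_commute) (rule le[OF y(1) x 3])
      also have "\<dots> < e" using b(2)[of "x - y"] 3 y(2) by (auto simp: dist_real_def)
      finally show ?thesis .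
    qed
  qed (use b in auto)
qed

lemma VI_cont:
  fixes \<phi> :: "real \<Rightarrow> 'a::euclidean_space"
  assumes K: "goodK \<Gamma> T \<eta> \<gamma>" and c: "continuous_on {0..T} \<phi>"
  shows "continuous_on {0..T} (VI \<Gamma> \<phi>)"
proof -
  obtain B where B: "B > 0" "\<And>s. s \<in> {0..T} \<Longrightarrow> norm (\<phi> s) \<le> B"
    using cont_bound[OF c] by blast
  have \<eta>: "\<eta> > 0" and \<gamma>: "\<gamma> > 0" using goodK_pos[OF K] by auto
  define \<omega> where "\<omega> \<delta> = sqrt (\<eta> * \<delta> powr (2 * \<gamma>) * (\<delta> * B\<^sup>2)) + sqrt (\<eta> * \<delta> powr (2 * \<gamma>) * (T * B\<^sup>2))" for \<delta>
  show ?thesis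
  proof (rule cont_modulus[where \<omega>=\<omega>])
    fix s t assume s: "s \<in> {0..T}" and t: "t \<in> {0..T}" and st: "s < t"
    let ?f = "\<lambda>u. \<Gamma> t u *\<^sub>R \<phi> u"
    have ct: "continuous_on {0..t} \<phi>" "continuous_on {0..s} \<phi>" "continuous_on {s..t} \<phi>"
      using s t st by (auto intro: continuous_on_subset[OF c])
    have i1: "set_integrable lborel {0..t} ?f" using VI_bound(1)[OF K ct(1)] t by auto
    have i2: "set_integrable lborel {0..s} (\<lambda>u. \<Gamma> s u *\<^sub>R \<phi> u)" using VI_bound(1)[OF K ct(2)] s by auto
    have fi: "?f integrable_on {0..t}" and VIt: "VI \<Gamma> \<phi> t = integral {0..t} ?f"
      using set_borel_integral_eq_integral[OF i1] unfolding VI_def by auto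
    have gi: "(\<lambda>u. \<Gamma> s u *\<^sub>R \<phi> u) integrable_on {0..s}" and VIs: "VI \<Gamma> \<phi> s = integral {0..s} (\<lambda>u. \<Gamma> s u *\<^sub>R \<phi> u)"
      using set_borel_integral_eq_integral[OF i2] unfolding VI_def by auto
    have fi0: "?f integrable_on {0..s}" by (rule integrable_on_subinterval[OF fi]) (use s st in auto)
    have PP: "0 \<le> \<eta> * (t - s) powr (2 * \<gamma>)" using \<eta> by simp
    have m1: "set_borel_measurable lborel {s..t} (\<Gamma> t)"
      by (rule goodK_meas[OF K]) (use s t st in auto)
    have b1: "(\<integral>\<^sup>+ u\<in>{s..t}. ennreal ((\<Gamma> t u)\<^sup>2) \<partial>lborel) \<le> ennreal (\<eta> * (t - s) powr (2 * \<gamma>))"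
      by (rule goodK_g1[OF K]) (use s t st in auto)
    have si1: "set_integrable lborel {s..t} ?f" by (rule kern_bound(1)[OF m1 ct(3) b1 PP])
    have n1: "(norm (LINT u:{s..t}|lborel. ?f u))\<^sup>2 \<le> \<eta> * (t - s) powr (2 * \<gamma>) * integral {s..t} (\<lambda>u. (norm (\<phi> u))\<^sup>2)"
      by (rule kern_bound(2)[OF m1 ct(3) b1 PP])
    have "integral {s..t} (\<lambda>u. (norm (\<phi> u))\<^sup>2) \<le> (t - s) * B\<^sup>2"
      by (rule integral_sq_bound[OF ct(3)]) (use B s t st in auto)
    then have "\<eta> * (t - s) powr (2 * \<gamma>) * integral {s..t} (\<lambda>u. (norm (\<phi> u))\<^sup>2) \<le> \<eta> * (t - s) powr (2 * \<gamma>) * ((t - s) * B\<^sup>2)"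
      using PP by (rule mult_left_mono)
    with n1 have n1': "(norm (integral {s..t} ?f))\<^sup>2 \<le> \<eta> * (t - s) powr (2 * \<gamma>) * ((t - s) * B\<^sup>2)"
      unfolding set_borel_integral_eq_integral(2)[OF si1] by linarith
    let ?g = "\<lambda>u. (\<Gamma> t u - \<Gamma> s u) *\<^sub>R \<phi> u"
    have m2: "set_borel_measurable lborel {0..s} (\<lambda>u. \<Gamma> t u - \<Gamma> s u)"
      by (rule goodK_meas_diff[OF K]) (use s t st in auto)
    have b2: "(\<integral>\<^sup>+ u\<in>{0..s}. ennreal ((\<Gamma> t u - \<Gamma> s u)\<^sup>2) \<partial>lborel) \<le> ennreal (\<eta> * (t - s) powr (2 * \<gamma>))"
      by (rule goodK_g2[OF K]) (use s t st in auto)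
    have si2: "set_integrable lborel {0..s} ?g" by (rule kern_bound(1)[OF m2 ct(2) b2 PP])
    have n2: "(norm (LINT u:{0..s}|lborel. ?g u))\<^sup>2 \<le> \<eta> * (t - s) powr (2 * \<gamma>) * integral {0..s} (\<lambda>u. (norm (\<phi> u))\<^sup>2)"
      by (rule kern_bound(2)[OF m2 ct(2) b2 PP])
    have "integral {0..s} (\<lambda>u. (norm (\<phi> u))\<^sup>2) \<le> (s - 0) * B\<^sup>2"
      by (rule integral_sq_bound[OF ct(2)]) (use B s t in auto)
    also have "\<dots> \<le> T * B\<^sup>2" using s by (intro mult_right_mono) auto
    finally have "\<eta> * (t - s) powr (2 * \<gamma>) * integral {0..s} (\<lambda>u. (norm (\<phi> u))\<^sup>2) \<le> \<eta> * (t - s) powr (2 * \<gamma>) * (T * B\<^sup>2)"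
      using PP by (rule mult_left_mono)
    with n2 have n2': "(norm (integral {0..s} ?g))\<^sup>2 \<le> \<eta> * (t - s) powr (2 * \<gamma>) * (T * B\<^sup>2)"
      unfolding set_borel_integral_eq_integral(2)[OF si2] by linarith
    have geq: "integral {0..s} ?g = integral {0..s} ?f - integral {0..s} (\<lambda>u. \<Gamma> s u *\<^sub>R \<phi> u)"
      by (subst integral_diff[symmetric]) (auto intro: fi0 gi simp: algebra_simps)
    have "VI \<Gamma> \<phi> t = integral {0..s} ?f + integral {s..t} ?f"
      unfolding VIt by (rule Henstock_Kurzweil_Integration.integral_combine[symmetric]) (use s st fi in auto)
    then have "VI \<Gamma> \<phi> t - VI \<Gamma> \<phi> s = integral {s..t} ?f + integral {0..s} ?g"
      unfolding VIs geq by simp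
    then have "dist (VI \<Gamma> \<phi> t) (VI \<Gamma> \<phi> s) \<le> norm (integral {s..t} ?f) + norm (integral {0..s} ?g)"
      by (simp add: dist_norm norm_triangle_ineq)
    also have "\<dots> \<le> \<omega> (t - s)"
      unfolding \<omega>_def by (intro add_mono real_le_rsqrt n1' n2')
    finally show "dist (VI \<Gamma> \<phi> t) (VI \<Gamma> \<phi> s) \<le> \<omega> (t - s)" .
  next
    have p: "((\<lambda>\<delta>::real. \<delta> powr (2 * \<gamma>)) \<longlongrightarrow> 0) (at_right 0)"
    proof (rule tendsto_zero_powrI)
      show "((\<lambda>\<delta>::real. \<delta>) \<longlongrightarrow> 0) (at_right 0)" by (rule tendsto_ident_at)
      show "((\<lambda>\<delta>::real. 2 * \<gamma>) \<longlongrightarrow> 2 * \<gamma>) (at_right 0)" by (rule tendsto_const)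
      show "\<forall>\<^sub>F x in at_right 0. 0 \<le> (x::real)" using eventually_at_right_less[of "0::real"] by (rule eventually_mono) simp
    qed (use \<gamma> in auto)
    have "((\<lambda>\<delta>. sqrt (\<eta> * \<delta> powr (2 * \<gamma>) * (\<delta> * B\<^sup>2)) + sqrt (\<eta> * \<delta> powr (2 * \<gamma>) * (T * B\<^sup>2))) \<longlongrightarrow>
         sqrt (\<eta> * 0 * (0 * B\<^sup>2)) + sqrt (\<eta> * 0 * (T * B\<^sup>2))) (at_right 0)"
      by (intro tendsto_intros p)
    then show "(\<omega> \<longlongrightarrow> 0) (at_right 0)" unfolding \<omega>_def by simp
  qed
qed

lemma has_integral_pow_fact:
  fixes K t :: real
  assumes "0 \<le> t"
  shows "((\<lambda>s. (K * s)^n / fact n) has_integral (K^n * t^Suc n / fact (Suc n))) {0..t}"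
proof -
  have "((\<lambda>s. (K * s)^n / fact n) has_integral ((\<lambda>s. K^n * s^Suc n / fact (Suc n)) t - (\<lambda>s. K^n * s^Suc n / fact (Suc n)) 0)) {0..t}"
  proof (rule fundamental_theorem_of_calculus[OF assms])
    fix x assume "x \<in> {0..t}"
    have "((\<lambda>s. K^n * s^Suc n / fact (Suc n)) has_real_derivative (K^n * (real (Suc n) * x^n) / fact (Suc n))) (at x within {0..t})"
      by (intro derivative_eq_intros) auto
    moreover have "K^n * (real (Suc n) * x^n) / fact (Suc n) = (K * x)^n / fact n"
      by (simp add: power_mult_distrib fact_Suc field_simps del: of_nat_Suc)
    ultimately show "((\<lambda>s. K^n * s^Suc n / fact (Suc n)) has_vector_derivative (K * x)^n / fact n) (at x within {0..t})"
      by (simp add: has_real_derivative_iff_has_vector_derivative)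
  qed
  then show ?thesis by simp
qed

lemma iter_bound:
  fixes f :: "nat \<Rightarrow> real \<Rightarrow> real"
  assumes cont: "\<And>n. continuous_on {0..T} (f n)"
    and f0: "\<And>t. t \<in> {0..T} \<Longrightarrow> f 0 t \<le> M"
    and step: "\<And>n t. t \<in> {0..T} \<Longrightarrow> f (Suc n) t \<le> c + K * integral {0..t} (f n)"
    and K: "K \<ge> 0" and c: "c \<ge> 0"
  shows "t \<in> {0..T} \<Longrightarrow> f n t \<le> c * (\<Sum>j<n. (K * t)^j / fact j) + M * (K * t)^n / fact n"
proof (induction n arbitrary: t)
  case 0
  then show ?case using f0 by simp
next
  case (Suc n)
  have t: "0 \<le> t" "t \<le> T" using Suc.prems by auto
  let ?g = "\<lambda>s. c * (\<Sum>j<n. (K * s)^j / fact j) + M * ((K * s)^n / fact n)"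
  have gi: "(?g has_integral (c * (\<Sum>j<n. K^j * t^Suc j / fact (Suc j)) + M * (K^n * t^Suc n / fact (Suc n)))) {0..t}"
    by (intro has_integral_add has_integral_mult_right has_integral_sum has_integral_pow_fact t) auto
  have fi: "f n integrable_on {0..t}"
    by (rule integrable_continuous_interval, rule continuous_on_subset[OF cont]) (use t in auto)
  have "integral {0..t} (f n) \<le> integral {0..t} ?g"
    by (rule integral_le[OF fi]) (use gi Suc.IH t in \<open>auto simp: integrable_on_def\<close>)
  also have "\<dots> = c * (\<Sum>j<n. K^j * t^Suc j / fact (Suc j)) + M * (K^n * t^Suc n / fact (Suc n))"
    using gi by (rule integral_unique)
  finally have "f (Suc n) t \<le> c + K * (c * (\<Sum>j<n. K^j * t^Suc j / fact (Suc j)) + M * (K^n * t^Suc n / fact (Suc n)))"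
    using step[OF Suc.prems] K by (meson mult_left_mono order_trans add_left_mono)
  also have "\<dots> = c * (\<Sum>j<Suc n. (K * t)^j / fact j) + M * (K * t)^Suc n / fact (Suc n)"
  proof -
    have "(\<Sum>j<Suc n. (K * t)^j / fact j) = 1 + (\<Sum>j<n. (K * t)^Suc j / fact (Suc j))"
      by (subst sum.lessThan_Suc_shift) simp
    moreover have "K * (\<Sum>j<n. K^j * t^Suc j / fact (Suc j)) = (\<Sum>j<n. (K * t)^Suc j / fact (Suc j))"
      unfolding sum_distrib_left by (intro sum.cong refl) (simp add: power_mult_distrib field_simps)
    ultimately show ?thesis
      by (simp add: algebra_simps power_mult_distrib)
  qed
  finally show ?case .
qed

lemma pow_fact_lim: "(\<lambda>n. (x::real)^n / fact n) \<longlonglongrightarrow> 0"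
proof -
  have "summable (\<lambda>n. x^n /\<^sub>R fact n)" using exp_converges[of x] by (rule sums_summable)
  then have "(\<lambda>n. x^n /\<^sub>R fact n) \<longlonglongrightarrow> 0" by (rule summable_LIMSEQ_zero)
  then show ?thesis by (simp add: divide_inverse_commute)
qed

lemma exp_partial_le:
  assumes "0 \<le> (x::real)"
  shows "(\<Sum>j<n. x^j / fact j) \<le> exp x"
proof -
  have "(\<lambda>n. x^n /\<^sub>R fact n) sums exp x" by (rule exp_converges)
  then have s: "summable (\<lambda>n. x^n /\<^sub>R fact n)" and e: "(\<Sum>n. x^n /\<^sub>R fact n) = exp x"
    by (auto simp: sums_iff)
  have "(\<Sum>j<n. x^j /\<^sub>R fact j) \<le> (\<Sum>n. x^n /\<^sub>R fact n)"
    by (rule sum_le_suminf[OF s]) (use assms in auto)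
  then have "(\<Sum>j<n. x^j /\<^sub>R fact j) \<le> exp x" using e by simp
  then show ?thesis by (simp add: divide_inverse_commute)
qed

lemma gronwall:
  fixes u :: "real \<Rightarrow> real"
  assumes cont: "continuous_on {0..T} u"
    and step: "\<And>t. t \<in> {0..T} \<Longrightarrow> u t \<le> c + K * integral {0..t} u"
    and K: "K \<ge> 0" and c: "c \<ge> 0" and t: "t \<in> {0..T}"
  shows "u t \<le> c * exp (K * t)"
proof -
  obtain M where M: "M > 0" "\<And>t. t \<in> {0..T} \<Longrightarrow> norm (u t) \<le> M" using cont_bound[OF cont] by blast
  have b: "u t \<le> c * (\<Sum>j<n. (K * t)^j / fact j) + M * (K * t)^n / fact n" for n
    by (rule iter_bound[where f="\<lambda>_. u", OF cont _ step K c t]) (use M in \<open>auto simp: abs_le_iff\<close>)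
  have Kt: "0 \<le> K * t" using K t by auto
  have "u t \<le> c * exp (K * t) + M * ((K * t)^n / fact n)" for n
    using b[of n] exp_partial_le[OF Kt, of n] c by (smt (verit) mult_left_mono times_divide_eq_right)
  moreover have "(\<lambda>n. c * exp (K * t) + M * ((K * t)^n / fact n)) \<longlonglongrightarrow> c * exp (K * t) + M * 0"
    by (intro tendsto_intros pow_fact_lim)
  ultimately show ?thesis
    by (intro LIMSEQ_le_const[of _ "c * exp (K * t)"]) auto
qed

lemma continuous_on_mv:
  fixes G :: "real \<Rightarrow> real^'n^'m" and X :: "real \<Rightarrow> real^'n"
  assumes "continuous_on S G" "continuous_on S X"
  shows "continuous_on S (\<lambda>t. G t *v X t)"
  unfolding matrix_vector_mult_def
  by (intro continuous_intros continuous_on_component assms)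

definition Phi :: "(real \<Rightarrow> real \<Rightarrow> real) \<Rightarrow> real^'d \<Rightarrow> (real \<Rightarrow> real^'d) \<Rightarrow> (real \<Rightarrow> real^'d^'d)
   \<Rightarrow> (real \<Rightarrow> real^'d) \<Rightarrow> real \<Rightarrow> real^'d" where
  "Phi \<Gamma> v F G X t = v + VI \<Gamma> (\<lambda>s. F s + G s *v X s) t"

lemma VI_diff:
  fixes \<phi> \<psi> :: "real \<Rightarrow> 'a::euclidean_space"
  assumes K: "goodK \<Gamma> T \<eta> \<gamma>" and c: "continuous_on {0..T} \<phi>" "continuous_on {0..T} \<psi>" and t: "t \<in> {0..T}"
  shows "VI \<Gamma> \<phi> t - VI \<Gamma> \<psi> t = VI \<Gamma> (\<lambda>s. \<phi> s - \<psi> s) t"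
proof -
  have c': "continuous_on {0..t} \<phi>" "continuous_on {0..t} \<psi>"
    using t by (auto intro: continuous_on_subset[OF c(1)] continuous_on_subset[OF c(2)])
  have i: "set_integrable lborel {0..t} (\<lambda>s. \<Gamma> t s *\<^sub>R \<phi> s)" "set_integrable lborel {0..t} (\<lambda>s. \<Gamma> t s *\<^sub>R \<psi> s)"
    using VI_bound(1)[OF K c'(1)] VI_bound(1)[OF K c'(2)] t by auto
  show ?thesis unfolding VI_def
    by (subst set_integral_diff(2)[OF i, symmetric]) (simp add: scaleR_diff_right)
qed

locale vsetup =
  fixes \<Gamma> :: "real \<Rightarrow> real \<Rightarrow> real" and T \<eta> \<gamma> :: real
    and v :: "real^'d" and F :: "real \<Rightarrow> real^'d" and G :: "real \<Rightarrow> real^'d^'d"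
  assumes K: "goodK \<Gamma> T \<eta> \<gamma>" and cF: "continuous_on {0..T} F" and cG: "continuous_on {0..T} G"
    and T0: "0 \<le> T"
begin

definition Gb where "Gb = (SOME B. B > 0 \<and> (\<forall>t\<in>{0..T}. norm (mnorm (G t)) \<le> B))"

lemma Gb: "Gb > 0" "\<And>t. t \<in> {0..T} \<Longrightarrow> mnorm (G t) \<le> Gb"
proof -
  obtain B where "B > 0" "\<And>t. t \<in> {0..T} \<Longrightarrow> norm (mnorm (G t)) \<le> B"
    using cont_bound[OF continuous_on_mnorm[OF cG]] by blast
  then have "\<exists>B. B > 0 \<and> (\<forall>t\<in>{0..T}. norm (mnorm (G t)) \<le> B)" by blast
  then have "Gb > 0 \<and> (\<forall>t\<in>{0..T}. norm (mnorm (G t)) \<le> Gb)" unfolding Gb_def by (rule someI_ex)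
  then show "Gb > 0" "\<And>t. t \<in> {0..T} \<Longrightarrow> mnorm (G t) \<le> Gb" by (auto simp: abs_le_iff)
qed

definition KK where "KK = \<eta> * T powr (2 * \<gamma>) * Gb\<^sup>2"

lemma KK0: "0 \<le> KK"
  using goodK_pos[OF K] unfolding KK_def by simp

lemma phi_cont: "continuous_on {0..T} X \<Longrightarrow> continuous_on {0..T} (\<lambda>s. F s + G s *v X s)"
  by (intro continuous_intros continuous_on_mv cF cG)

lemma Phi_cont: "continuous_on {0..T} X \<Longrightarrow> continuous_on {0..T} (Phi \<Gamma> v F G X)"
  unfolding Phi_def by (intro continuous_intros VI_cont[OF K] phi_cont)

lemma Phi_diff:
  assumes cX: "continuous_on {0..T} X" and cY: "continuous_on {0..T} Y" and t: "t \<in> {0..T}"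
  shows "(norm (Phi \<Gamma> v F G X t - Phi \<Gamma> v F G Y t))\<^sup>2 \<le> KK * integral {0..t} (\<lambda>s. (norm (X s - Y s))\<^sup>2)"
proof -
  have "Phi \<Gamma> v F G X t - Phi \<Gamma> v F G Y t = VI \<Gamma> (\<lambda>s. (F s + G s *v X s) - (F s + G s *v Y s)) t"
    unfolding Phi_def using VI_diff[OF K phi_cont[OF cX] phi_cont[OF cY] t] by simp
  also have "\<dots> = VI \<Gamma> (\<lambda>s. G s *v (X s - Y s)) t"
    by (simp add: matrix_vector_mult_diff_distrib)
  finally have e: "Phi \<Gamma> v F G X t - Phi \<Gamma> v F G Y t = VI \<Gamma> (\<lambda>s. G s *v (X s - Y s)) t" .
  have cD: "continuous_on {0..T} (\<lambda>s. G s *v (X s - Y s))"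
    by (intro continuous_on_mv cG continuous_intros cX cY)
  have cD': "continuous_on {0..t} (\<lambda>s. G s *v (X s - Y s))"
    by (rule continuous_on_subset[OF cD]) (use t in auto)
  have cN: "continuous_on {0..t} (\<lambda>s. (norm (X s - Y s))\<^sup>2)"
    by (rule continuous_on_subset[of "{0..T}"]) (use t in \<open>auto intro!: continuous_intros cX cY\<close>)
  have "(norm (VI \<Gamma> (\<lambda>s. G s *v (X s - Y s)) t))\<^sup>2 \<le> (\<eta> * T powr (2 * \<gamma>)) * integral {0..t} (\<lambda>s. (norm (G s *v (X s - Y s)))\<^sup>2)"
    by (rule VI_bound(2)[OF K cD']) (use t in auto)
  also have "integral {0..t} (\<lambda>s. (norm (G s *v (X s - Y s)))\<^sup>2) \<le> integral {0..t} (\<lambda>s. Gb\<^sup>2 * (norm (X s - Y s))\<^sup>2)"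
  proof (rule integral_le)
    show "(\<lambda>s. (norm (G s *v (X s - Y s)))\<^sup>2) integrable_on {0..t}"
      by (intro integrable_continuous_interval continuous_intros cD')
    show "(\<lambda>s. Gb\<^sup>2 * (norm (X s - Y s))\<^sup>2) integrable_on {0..t}"
      by (intro integrable_continuous_interval continuous_intros cN)
    fix s assume s: "s \<in> {0..t}"
    have "norm (G s *v (X s - Y s)) \<le> mnorm (G s) * norm (X s - Y s)" by (rule mnorm_mult)
    also have "\<dots> \<le> Gb * norm (X s - Y s)" using Gb(2)[of s] s t by (intro mult_right_mono) auto
    finally have "(norm (G s *v (X s - Y s)))\<^sup>2 \<le> (Gb * norm (X s - Y s))\<^sup>2"
      by (intro power_mono) auto
    then show "(norm (G s *v (X s - Y s)))\<^sup>2 \<le> Gb\<^sup>2 * (norm (X s - Y s))\<^sup>2"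
      by (simp add: power_mult_distrib)
  qed
  then have "(\<eta> * T powr (2 * \<gamma>)) * integral {0..t} (\<lambda>s. (norm (G s *v (X s - Y s)))\<^sup>2)
      \<le> (\<eta> * T powr (2 * \<gamma>)) * integral {0..t} (\<lambda>s. Gb\<^sup>2 * (norm (X s - Y s))\<^sup>2)"
    using goodK_pos[OF K] by (intro mult_left_mono) auto
  also have "\<dots> = KK * integral {0..t} (\<lambda>s. (norm (X s - Y s))\<^sup>2)"
    unfolding KK_def by simp
  finally show ?thesis unfolding e .
qed

lemma uniqueness:
  assumes cX: "continuous_on {0..T} X" and cY: "continuous_on {0..T} Y"
    and sX: "\<And>t. t \<in> {0..T} \<Longrightarrow> X t = Phi \<Gamma> v F G X t"
    and sY: "\<And>t. t \<in> {0..T} \<Longrightarrow> Y t = Phi \<Gamma> v F G Y t"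
    and t: "t \<in> {0..T}"
  shows "X t = Y t"
proof -
  let ?u = "\<lambda>s. (norm (X s - Y s))\<^sup>2"
  have "?u t \<le> 0 * exp (KK * t)"
  proof (rule gronwall)
    show "continuous_on {0..T} ?u" by (intro continuous_intros cX cY)
    fix s assume s: "s \<in> {0..T}"
    show "?u s \<le> 0 + KK * integral {0..s} ?u"
      using Phi_diff[OF cX cY s] sX[OF s] sY[OF s] by simp
  qed (use KK0 t in auto)
  then show ?thesis by simp
qed

end

lemma sqrt_mult_le_avg:
  assumes "0 \<le> x" "0 \<le> y"
  shows "sqrt (x * y) \<le> (x + y) / 2"
proof (rule real_le_lsqrt)
  show "0 \<le> (x + y) / 2" using assms by simp
  have "0 \<le> (x - y)\<^sup>2" by simp
  then show "x * y \<le> ((x + y) / 2)\<^sup>2" by (simp add: power2_eq_square field_simps)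
qed

context vsetup
begin

lemma sol_iff:
  assumes cX: "continuous_on {0..T} X"
  shows "volterra_solution \<Gamma> v F G T X \<longleftrightarrow> (\<forall>t\<in>{0..T}. X t = Phi \<Gamma> v F G X t)"
proof -
  have "set_integrable lborel {0..t} (\<lambda>s. \<Gamma> t s *\<^sub>R (F s + G s *v X s))" if t: "t \<in> {0..T}" for t
    by (rule VI_bound(1)[OF K]) (use t in \<open>auto intro: continuous_on_subset[OF phi_cont[OF cX]]\<close>)
  then show ?thesis unfolding volterra_solution_def Phi_def VI_def by auto
qed

primrec Xs :: "nat \<Rightarrow> real \<Rightarrow> real^'d" where
  "Xs 0 = (\<lambda>t. v)"
| "Xs (Suc n) = Phi \<Gamma> v F G (Xs n)"

lemma cXs: "continuous_on {0..T} (Xs n)"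
  by (induction n) (auto intro: Phi_cont)

lemma existence: "\<exists>X. continuous_on {0..T} X \<and> (\<forall>t\<in>{0..T}. X t = Phi \<Gamma> v F G X t)"
proof -
  define D where "D n t = Xs (Suc n) t - Xs n t" for n t
  define f where "f n t = (norm (D n t))\<^sup>2" for n t
  have cf: "continuous_on {0..T} (f n)" for n
    unfolding f_def D_def by (intro continuous_intros cXs)
  obtain M where M: "M > 0" "\<And>t. t \<in> {0..T} \<Longrightarrow> norm (f 0 t) \<le> M" using cont_bound[OF cf] by blast
  have fb: "f n t \<le> 0 * (\<Sum>j<n. (KK * t)^j / fact j) + M * (KK * t)^n / fact n" if t: "t \<in> {0..T}" for n t
  proof (rule iter_bound[OF cf _ _ KK0 order_refl t])
    show "f 0 t \<le> M" if "t \<in> {0..T}" for t using M(2)[OF that] by simp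
    show "f (Suc n) t \<le> 0 + KK * integral {0..t} (f n)" if "t \<in> {0..T}" for n t
      using Phi_diff[OF cXs cXs that, of "Suc n" n] unfolding f_def D_def by simp
  qed
  define b where "b n = (M * (4 * KK * T)^n / fact n + (1/4)^n) / 2" for n
  have Db: "norm (D n t) \<le> b n" if t: "t \<in> {0..T}" for n t
  proof -
    have "f n t \<le> M * (KK * T)^n / fact n"
    proof -
      have "(KK * t)^n \<le> (KK * T)^n" using t KK0 by (intro power_mono mult_left_mono) auto
      then have "M * (KK * t)^n / fact n \<le> M * (KK * T)^n / fact n"
        using M by (intro divide_right_mono mult_left_mono) auto
      then show ?thesis using fb[OF t, of n] by simp
    qed
    also have "\<dots> = (M * (4 * KK * T)^n / fact n) * (1/4)^n"
      by (simp add: power_mult_distrib field_simps)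
    finally have "sqrt (f n t) \<le> sqrt ((M * (4 * KK * T)^n / fact n) * (1/4)^n)"
      by (rule real_sqrt_le_mono)
    also have "\<dots> \<le> b n" unfolding b_def
      by (rule sqrt_mult_le_avg) (use M KK0 T0 in auto)
    finally show ?thesis unfolding f_def by simp
  qed
  have sb: "summable b"
  proof -
    have "summable (\<lambda>n. (4 * KK * T)^n /\<^sub>R fact n)"
      using exp_converges by (rule sums_summable)
    then have s1: "summable (\<lambda>n. M * ((4 * KK * T)^n / fact n))"
      by (intro summable_mult) (simp add: divide_inverse_commute)
    have s2: "summable (\<lambda>n. (1/4::real)^n)" by (rule summable_geometric) simp
    show ?thesis unfolding b_def
      using summable_divide[OF summable_add[OF s1 s2], of 2] by simp
  qed
  have ul: "uniform_limit {0..T} (\<lambda>n t. \<Sum>i<n. D i t) (\<lambda>t. \<Sum>i. D i t) sequentially"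
    by (rule Weierstrass_m_test[OF Db sb])
  have tel: "(\<Sum>i<n. D i t) = Xs n t - v" for n t
    unfolding D_def by (subst sum_lessThan_telescope) simp
  define X where "X t = v + (\<Sum>i. D i t)" for t
  have ulX: "uniform_limit {0..T} Xs X sequentially"
    unfolding uniform_limit_iff
  proof (intro allI impI)
    fix e :: real assume "e > 0"
    then have "\<forall>\<^sub>F n in sequentially. \<forall>t\<in>{0..T}. dist (\<Sum>i<n. D i t) (\<Sum>i. D i t) < e"
      using ul unfolding uniform_limit_iff by blast
    then show "\<forall>\<^sub>F n in sequentially. \<forall>t\<in>{0..T}. dist (Xs n t) (X t) < e"
      by (rule eventually_mono) (simp add: tel X_def dist_norm algebra_simps)
  qed
  have cX: "continuous_on {0..T} X"
    by (rule uniform_limit_theorem[OF _ ulX]) (auto intro: cXs always_eventually)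
  have "X t = Phi \<Gamma> v F G X t" if t: "t \<in> {0..T}" for t
  proof -
    have l1: "(\<lambda>n. Xs n t) \<longlonglongrightarrow> X t" by (rule tendsto_uniform_limitI[OF ulX t])
    then have l2: "(\<lambda>n. Xs (Suc n) t) \<longlonglongrightarrow> X t" by (rule LIMSEQ_Suc)
    have l3: "(\<lambda>n. Xs (Suc n) t) \<longlonglongrightarrow> Phi \<Gamma> v F G X t"
    proof (rule tendstoI)
      fix e :: real assume e: "e > 0"
      define \<epsilon> where "\<epsilon> = e / sqrt (KK * T + 1)"
      have sq: "sqrt (KK * T + 1) > 0" using KK0 T0 by (simp add: add_nonneg_pos)
      have \<epsilon>: "\<epsilon> > 0" unfolding \<epsilon>_def using e sq by simp
      have "\<forall>\<^sub>F n in sequentially. \<forall>s\<in>{0..T}. dist (Xs n s) (X s) < \<epsilon>"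
        using ulX \<epsilon> unfolding uniform_limit_iff by blast
      then show "\<forall>\<^sub>F n in sequentially. dist (Xs (Suc n) t) (Phi \<Gamma> v F G X t) < e"
      proof (rule eventually_mono)
        fix n assume h: "\<forall>s\<in>{0..T}. dist (Xs n s) (X s) < \<epsilon>"
        have "integral {0..t} (\<lambda>s. (norm (X s - Xs n s))\<^sup>2) \<le> (t - 0) * \<epsilon>\<^sup>2"
        proof (rule integral_sq_bound)
          show "continuous_on {0..t} (\<lambda>s. X s - Xs n s)"
            by (rule continuous_on_subset[of "{0..T}"]) (use t in \<open>auto intro!: continuous_intros cX cXs\<close>)
          show "norm (X s - Xs n s) \<le> \<epsilon>" if "s \<in> {0..t}" for s
            using h that t by (auto simp: dist_norm norm_minus_commute intro: less_imp_le)
        qed (use t in auto)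
        also have "\<dots> \<le> T * \<epsilon>\<^sup>2" using t by (intro mult_right_mono) auto
        finally have "KK * integral {0..t} (\<lambda>s. (norm (X s - Xs n s))\<^sup>2) \<le> KK * (T * \<epsilon>\<^sup>2)"
          using KK0 by (rule mult_left_mono)
        with Phi_diff[OF cX cXs t, of n]
        have "(norm (Phi \<Gamma> v F G X t - Xs (Suc n) t))\<^sup>2 \<le> KK * T * \<epsilon>\<^sup>2" by simp
        also have "\<dots> = KK * T * e\<^sup>2 / (KK * T + 1)"
          unfolding \<epsilon>_def using KK0 T0 by (simp add: power_divide)
        also have "\<dots> < e\<^sup>2"
        proof -
          have p: "0 < KK * T + 1" using KK0 T0 by (simp add: add_nonneg_pos)
          have "KK * T * e\<^sup>2 < (KK * T + 1) * e\<^sup>2" using e by simp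
          then show ?thesis using p by (simp add: divide_less_eq mult.commute)
        qed
        finally have "norm (Phi \<Gamma> v F G X t - Xs (Suc n) t) < e"
          using e by (simp add: power_less_imp_less_base)
        then show "dist (Xs (Suc n) t) (Phi \<Gamma> v F G X t) < e" by (simp add: dist_norm norm_minus_commute)
      qed
    qed
    show ?thesis using LIMSEQ_unique[OF l2 l3] .
  qed
  with cX show ?thesis by blast
qed

end

definition lsolve :: "real \<Rightarrow> real^'d^'d \<Rightarrow> real^'d \<Rightarrow> real^'d" where
  "lsolve \<epsilon> A b = (SOME S. S = b + \<epsilon> *\<^sub>R (A *v S))"

lemma lsolve_unique:
  assumes "0 \<le> \<epsilon>" "\<epsilon> * mnorm A < 1" "S1 = b + \<epsilon> *\<^sub>R (A *v S1)" "S2 = b + \<epsilon> *\<^sub>R (A *v S2)"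
  shows "S1 = S2"
proof -
  have "S1 - S2 = (b + \<epsilon> *\<^sub>R (A *v S1)) - (b + \<epsilon> *\<^sub>R (A *v S2))"
    by (rule arg_cong2[where f=minus, OF assms(3) assms(4)])
  also have "\<dots> = \<epsilon> *\<^sub>R (A *v (S1 - S2))"
    by (simp add: matrix_vector_mult_diff_distrib scaleR_diff_right)
  finally have "S1 - S2 = \<epsilon> *\<^sub>R (A *v (S1 - S2))" .
  then have "norm (S1 - S2) = norm (\<epsilon> *\<^sub>R (A *v (S1 - S2)))" by (rule arg_cong)
  also have "\<dots> = \<epsilon> * norm (A *v (S1 - S2))" using assms(1) by simp
  also have "\<dots> \<le> \<epsilon> * (mnorm A * norm (S1 - S2))" using assms(1) mnorm_mult by (rule mult_left_mono[rotated])
  finally have "(1 - \<epsilon> * mnorm A) * norm (S1 - S2) \<le> 0" by (simp add: algebra_simps)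
  then have "norm (S1 - S2) \<le> 0" using assms(2) by (simp add: mult_le_0_iff)
  then show ?thesis by simp
qed

lemma lsolve_eq:
  assumes "0 \<le> \<epsilon>" "\<epsilon> * mnorm A < 1"
  shows "lsolve \<epsilon> A b = b + \<epsilon> *\<^sub>R (A *v lsolve \<epsilon> A b)"
proof -
  have "\<exists>!x. (\<lambda>S. b + \<epsilon> *\<^sub>R (A *v S)) x = x"
  proof (rule banach_fix_type[of "\<epsilon> * mnorm A"])
    show "0 \<le> \<epsilon> * mnorm A" by (intro mult_nonneg_nonneg assms(1) mnorm_nonneg)
    show "\<forall>x y. dist (b + \<epsilon> *\<^sub>R (A *v x)) (b + \<epsilon> *\<^sub>R (A *v y)) \<le> \<epsilon> * mnorm A * dist x y"
    proof (intro allI)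
      fix x y
      have "dist (b + \<epsilon> *\<^sub>R (A *v x)) (b + \<epsilon> *\<^sub>R (A *v y)) = \<epsilon> * norm (A *v (x - y))"
      proof -
        have "(b + \<epsilon> *\<^sub>R (A *v x)) - (b + \<epsilon> *\<^sub>R (A *v y)) = \<epsilon> *\<^sub>R (A *v (x - y))"
          by (simp add: matrix_vector_mult_diff_distrib scaleR_diff_right)
        then show ?thesis using assms(1) by (simp add: dist_norm)
      qed
      also have "\<dots> \<le> \<epsilon> * (mnorm A * norm (x - y))" using assms(1) mnorm_mult by (rule mult_left_mono[rotated])
      finally show "dist (b + \<epsilon> *\<^sub>R (A *v x)) (b + \<epsilon> *\<^sub>R (A *v y)) \<le> \<epsilon> * mnorm A * dist x y"
        by (simp add: dist_norm mult.assoc)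
    qed
  qed (use assms in auto)
  then obtain S where "S = b + \<epsilon> *\<^sub>R (A *v S)" by metis
  then show ?thesis unfolding lsolve_def by (rule someI)
qed

lemma abs_diag_le_mnorm: "\<bar>A $ i $ j\<bar> \<le> mnorm A"
proof -
  have "\<bar>A $ i $ j\<bar> \<le> (\<Sum>j\<in>UNIV. \<bar>A $ i $ j\<bar>)"
    by (rule member_le_sum) auto
  also have "\<dots> \<le> (\<Sum>i\<in>UNIV. \<Sum>j\<in>UNIV. \<bar>A $ i $ j\<bar>)"
    by (rule member_le_sum[of i UNIV "\<lambda>i. \<Sum>j\<in>UNIV. \<bar>A $ i $ j\<bar>"]) (auto intro: sum_nonneg)
  finally show ?thesis unfolding mnorm_def .
qed

lemma lsolve_nonneg:
  fixes A :: "real^'d^'d" and b :: "real^'d"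
  assumes e0: "0 \<le> \<epsilon>" and small: "2 * (\<epsilon> * mnorm A) < 1"
    and metz: "\<And>i j. i \<noteq> j \<Longrightarrow> 0 \<le> A $ i $ j" and b0: "\<And>i. 0 \<le> b $ i"
  shows "0 \<le> lsolve \<epsilon> A b $ i"
proof -
  define lam where "lam = mnorm A"
  have l0: "0 \<le> lam" unfolding lam_def by (rule mnorm_nonneg)
  define P where "P S = (1 / (1 + \<epsilon> * lam)) *\<^sub>R (b + \<epsilon> *\<^sub>R (A *v S + lam *\<^sub>R S))" for S
  define Ort where "Ort = {x::real^'d. \<forall>i. 0 \<le> x $ i}"
  have d: "1 + \<epsilon> * lam > 0" using e0 l0 by (simp add: add_pos_nonneg)
  have "\<exists>!x\<in>Ort. P x = x"
  proof (rule Banach_fix[of Ort "2 * (\<epsilon> * mnorm A)"])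
    show "complete Ort" unfolding Ort_def using closed_positive_orthant complete_eq_closed by blast
    show "Ort \<noteq> {}" unfolding Ort_def by (auto intro!: exI[of _ 0])
    show "0 \<le> 2 * (\<epsilon> * mnorm A)" using mult_nonneg_nonneg[OF e0 mnorm_nonneg[of A]] by simp
    show "2 * (\<epsilon> * mnorm A) < 1" by (rule small)
    show "P ` Ort \<subseteq> Ort"
    proof (clarsimp simp: Ort_def)
      fix x :: "real^'d" and i assume x: "\<forall>i. 0 \<le> x $ i"
      have "0 \<le> (A *v x + lam *\<^sub>R x) $ i"
      proof -
        have "(A *v x) $ i = A $ i $ i * x $ i + (\<Sum>j\<in>UNIV - {i}. A $ i $ j * x $ j)"
          unfolding matrix_vector_mult_def by (simp add: sum.remove[of UNIV i "\<lambda>j. A $ i $ j * x $ j"])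
        moreover have "0 \<le> (\<Sum>j\<in>UNIV - {i}. A $ i $ j * x $ j)"
          using metz x by (intro sum_nonneg) auto
        moreover have "0 \<le> A $ i $ i * x $ i + lam * x $ i"
        proof -
          have "- (A $ i $ i) \<le> lam" using abs_diag_le_mnorm[of A i i] unfolding lam_def by linarith
          then have "- (A $ i $ i) * x $ i \<le> lam * x $ i" using x by (intro mult_right_mono) auto
          then show ?thesis by linarith
        qed
        ultimately show ?thesis by simp
      qed
      then show "0 \<le> P x $ i" unfolding P_def using d b0[of i] e0 by simp
    qed
    fix x y assume "x \<in> Ort" "y \<in> Ort"
    have "P x - P y = (1 / (1 + \<epsilon> * lam)) *\<^sub>R (\<epsilon> *\<^sub>R (A *v (x - y) + lam *\<^sub>R (x - y)))"
    proof -
      have eq: "(b + \<epsilon> *\<^sub>R (A *v x + lam *\<^sub>R x)) - (b + \<epsilon> *\<^sub>R (A *v y + lam *\<^sub>R y)) = \<epsilon> *\<^sub>R (A *v (x - y) + lam *\<^sub>R (x - y))"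
        by (simp add: matrix_vector_mult_diff_distrib scaleR_diff_right algebra_simps)
      have "P x - P y = (1 / (1 + \<epsilon> * lam)) *\<^sub>R ((b + \<epsilon> *\<^sub>R (A *v x + lam *\<^sub>R x)) - (b + \<epsilon> *\<^sub>R (A *v y + lam *\<^sub>R y)))"
        unfolding P_def by (rule scaleR_diff_right[symmetric])
      then show ?thesis unfolding eq .
    qed
    then have "dist (P x) (P y) = (1 / (1 + \<epsilon> * lam)) * (\<epsilon> * norm (A *v (x - y) + lam *\<^sub>R (x - y)))"
      using d e0 unfolding dist_norm by simp
    also have "\<dots> \<le> 1 * (\<epsilon> * (2 * lam * norm (x - y)))"
    proof (intro mult_mono mult_left_mono)
      have "norm (A *v (x - y) + lam *\<^sub>R (x - y)) \<le> norm (A *v (x - y)) + norm (lam *\<^sub>R (x - y))"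
        by (rule norm_triangle_ineq)
      also have "\<dots> \<le> lam * norm (x - y) + lam * norm (x - y)"
        using mnorm_mult[of A "x - y"] l0 unfolding lam_def by simp
      finally show "norm (A *v (x - y) + lam *\<^sub>R (x - y)) \<le> 2 * lam * norm (x - y)" by simp
      show "1 / (1 + \<epsilon> * lam) \<le> 1" using d e0 l0 by simp
    qed (use e0 in auto)
    finally show "dist (P x) (P y) \<le> 2 * (\<epsilon> * mnorm A) * dist x y"
      unfolding lam_def by (simp add: dist_norm mult_ac)
  qed
  then obtain S where S: "S \<in> Ort" "P S = S" by auto
  have Seq: "S = b + \<epsilon> *\<^sub>R (A *v S)"
  proof -
    have "(1 + \<epsilon> * lam) *\<^sub>R S = b + \<epsilon> *\<^sub>R (A *v S + lam *\<^sub>R S)"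
    proof -
      have "(1 + \<epsilon> * lam) *\<^sub>R P S = b + \<epsilon> *\<^sub>R (A *v S + lam *\<^sub>R S)"
        unfolding P_def using d by simp
      then show ?thesis using S(2) by simp
    qed
    then have "S + (\<epsilon> * lam) *\<^sub>R S = b + \<epsilon> *\<^sub>R (A *v S) + (\<epsilon> * lam) *\<^sub>R S"
      by (simp add: scaleR_add_left scaleR_add_right)
    then show ?thesis by simp
  qed
  have sm: "\<epsilon> * mnorm A < 1" using small by linarith
  have Leq: "lsolve \<epsilon> A b = b + \<epsilon> *\<^sub>R (A *v lsolve \<epsilon> A b)"
    by (rule lsolve_eq[OF e0 sm])
  have "lsolve \<epsilon> A b = S"
    by (rule lsolve_unique[OF e0 sm Leq Seq])
  then show ?thesis using S(1) unfolding Ort_def by auto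
qed

primrec srec_pre :: "(nat \<Rightarrow> (nat \<Rightarrow> 'a) \<Rightarrow> 'a) \<Rightarrow> nat \<Rightarrow> nat \<Rightarrow> 'a" where
  "srec_pre f 0 = (\<lambda>_. undefined)"
| "srec_pre f (Suc n) = (srec_pre f n)(n := f n (srec_pre f n))"

definition srec :: "(nat \<Rightarrow> (nat \<Rightarrow> 'a) \<Rightarrow> 'a) \<Rightarrow> nat \<Rightarrow> 'a" where
  "srec f k = srec_pre f (Suc k) k"

lemma srec_pre_eq: "j < n \<Longrightarrow> srec_pre f n j = srec f j"
proof (induction n)
  case 0 then show ?case by simp
next
  case (Suc n)
  show ?case
  proof (cases "j = n")
    case True then show ?thesis by (simp add: srec_def)
  next
    case False then show ?thesis using Suc by simp
  qed
qed

lemma srec_eq: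
  assumes cong: "\<And>p q. (\<And>j. j < k \<Longrightarrow> p j = q j) \<Longrightarrow> f k p = f k q"
  shows "srec f k = f k (srec f)"
proof -
  have "srec f k = f k (srec_pre f k)" by (simp add: srec_def)
  also have "\<dots> = f k (srec f)" by (rule cong) (rule srec_pre_eq)
  finally show ?thesis .
qed

lemma disc_gronwall:
  fixes a :: "nat \<Rightarrow> real"
  assumes a0: "\<And>k. 0 \<le> a k"
    and V: "\<And>j k. V k \<Longrightarrow> j \<le> k \<Longrightarrow> V j"
    and rec: "\<And>k. V k \<Longrightarrow> a k \<le> q + r * (\<Sum>j\<le>k. a j)"
    and r: "0 \<le> r" "r \<le> 1/2" and q: "0 \<le> q"
  shows "V k \<Longrightarrow> a k \<le> 2 * q * (1 + 2 * r)^k"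
proof (induction k rule: less_induct)
  case (less k)
  have IH: "a j \<le> 2 * q * (1 + 2 * r)^j" if "j < k" for j using less.IH[OF that] V[OF less.prems, of j] that by simp
  have "a k \<le> q + r * (\<Sum>j<k. a j) + r * a k"
    using rec[OF less.prems] by (simp add: lessThan_Suc_atMost[symmetric] algebra_simps)
  then have "(1 - r) * a k \<le> q + r * (\<Sum>j<k. a j)" by (simp add: algebra_simps)
  moreover have "a k \<le> 2 * ((1 - r) * a k)"
  proof -
    have "(2 * r) * a k \<le> 1 * a k" using r a0[of k] by (intro mult_right_mono) auto
    then show ?thesis by (simp add: algebra_simps)
  qed
  ultimately have ak: "a k \<le> 2 * q + 2 * r * (\<Sum>j<k. a j)" by linarith
  have "(\<Sum>j<k. a j) \<le> (\<Sum>j<k. 2 * q * (1 + 2 * r)^j)" by (intro sum_mono IH) auto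
  then have "2 * r * (\<Sum>j<k. a j) \<le> 2 * r * (\<Sum>j<k. 2 * q * (1 + 2 * r)^j)" using r by (intro mult_left_mono) auto
  also have "\<dots> = 2 * q * ((2 * r) * (\<Sum>j<k. (1 + 2 * r)^j))" by (simp add: sum_distrib_left algebra_simps)
  also have "(2 * r) * (\<Sum>j<k. (1 + 2 * r)^j) = (1 + 2 * r)^k - 1"
  proof (cases "r = 0")
    case True then show ?thesis by simp
  next
    case False
    then have "(\<Sum>j<k. (1 + 2 * r)^j) = ((1 + 2 * r)^k - 1) / ((1 + 2 * r) - 1)"
      by (intro geometric_sum) simp
    then show ?thesis using False by simp
  qed
  finally show ?case using ak by (simp add: algebra_simps)
qed

lemma pow_le_exp:
  assumes "0 \<le> (x::real)"
  shows "(1 + x)^k \<le> exp (real k * x)"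
proof -
  have "(1 + x)^k \<le> (exp x)^k" using assms by (intro power_mono) auto
  then show ?thesis by (simp add: exp_of_nat_mult)
qed

lemma riemann_err:
  fixes f :: "real \<Rightarrow> 'a::euclidean_space"
  assumes h: "h > 0" and c: "continuous_on {0..real k * h} f"
    and osc: "\<And>j s. j < k \<Longrightarrow> s \<in> {real j * h..real (Suc j) * h} \<Longrightarrow> norm (f s - f (real j * h)) \<le> \<epsilon>"
  shows "norm (integral {0..real k * h} f - h *\<^sub>R (\<Sum>j<k. f (real j * h))) \<le> real k * h * \<epsilon>"
  using c osc
proof (induction k)
  case 0 then show ?case by simp
next
  case (Suc k)
  have c0: "continuous_on {0..real k * h} f" by (rule continuous_on_subset[OF Suc.prems(1)]) (use h in auto)
  have IH: "norm (integral {0..real k * h} f - h *\<^sub>R (\<Sum>j<k. f (real j * h))) \<le> real k * h * \<epsilon>"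
    by (rule Suc.IH[OF c0 Suc.prems(2)]) auto
  have c1: "continuous_on {real k * h..real (Suc k) * h} f" by (rule continuous_on_subset[OF Suc.prems(1)]) (use h in auto)
  have "integral {0..real (Suc k) * h} f = integral {0..real k * h} f + integral {real k * h..real (Suc k) * h} f"
    by (rule Henstock_Kurzweil_Integration.integral_combine[symmetric])
       (use h Suc.prems(1) in \<open>auto intro: integrable_continuous_interval simp: algebra_simps\<close>)
  moreover have "integral {real k * h..real (Suc k) * h} f = integral {real k * h..real (Suc k) * h} (\<lambda>s. f s - f (real k * h)) + h *\<^sub>R f (real k * h)"
  proof -
    have e1: "integral {real k * h..real (Suc k) * h} (\<lambda>s. f s - f (real k * h)) = integral {real k * h..real (Suc k) * h} f - integral {real k * h..real (Suc k) * h} (\<lambda>s. f (real k * h))"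
      by (rule integral_diff) (use integrable_continuous_interval[OF c1] in auto)
    have e2: "integral {real k * h..real (Suc k) * h} (\<lambda>s. f (real k * h)) = h *\<^sub>R f (real k * h)"
      using h by (simp add: algebra_simps)
    show ?thesis unfolding e1 e2 by simp
  qed
  moreover have "norm (integral {real k * h..real (Suc k) * h} (\<lambda>s. f s - f (real k * h))) \<le> \<epsilon> * (real (Suc k) * h - real k * h)"
  proof (rule integral_bound)
    show "continuous_on {real k * h..real (Suc k) * h} (\<lambda>s. f s - f (real k * h))"
      by (intro continuous_intros c1)
  qed (use h Suc.prems(2)[of k] in auto)
  ultimately have E1: "integral {0..real (Suc k) * h} f - h *\<^sub>R (\<Sum>j<Suc k. f (real j * h))
      = (integral {0..real k * h} f - h *\<^sub>R (\<Sum>j<k. f (real j * h))) + integral {real k * h..real (Suc k) * h} (\<lambda>s. f s - f (real k * h))"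
    and E2: "norm (integral {real k * h..real (Suc k) * h} (\<lambda>s. f s - f (real k * h))) \<le> h * \<epsilon>"
    by (auto simp: algebra_simps scaleR_add_right)
  have "norm (integral {0..real (Suc k) * h} f - h *\<^sub>R (\<Sum>j<Suc k. f (real j * h))) \<le> real k * h * \<epsilon> + h * \<epsilon>"
    unfolding E1 using IH E2 norm_triangle_ineq[of "integral {0..real k * h} f - h *\<^sub>R (\<Sum>j<k. f (real j * h))" "integral {real k * h..real (Suc k) * h} (\<lambda>s. f s - f (real k * h))"]
    by linarith
  then show ?case by (simp add: algebra_simps)
qed

locale pscheme =
  fixes \<Gamma> :: "real \<Rightarrow> real \<Rightarrow> real" and T :: real
    and v :: "real^'d" and F :: "real \<Rightarrow> real^'d" and G :: "real \<Rightarrow> real^'d^'d"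
    and X :: "real \<Rightarrow> real^'d"
  assumes P: "cond_P \<Gamma>" and T0: "T > 0"
    and cF: "continuous_on {0..T} F" and cG: "continuous_on {0..T} G"
    and v0: "\<forall>i. 0 \<le> v $ i"
    and F0: "\<forall>t\<in>{0..T}. \<forall>i. 0 \<le> F t $ i"
    and G0: "\<forall>t\<in>{0..T}. \<forall>i j. i \<noteq> j \<longrightarrow> 0 \<le> G t $ i $ j"
    and cX: "continuous_on {0..T} X"
    and sol: "\<forall>t\<in>{0..T}. X t = v + VI \<Gamma> (\<lambda>s. F s + G s *v X s) t"
begin

lemma Pc: "continuous_on Delta (\<lambda>(t, s). \<Gamma> t s)" using P unfolding cond_P_def by blast
lemma Pnn: "0 \<le> s \<Longrightarrow> s \<le> t \<Longrightarrow> 0 \<le> \<Gamma> t s" using P unfolding cond_P_def Delta_def by blast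
lemma Pdiag: "0 \<le> s \<Longrightarrow> 0 < \<Gamma> s s" using P unfolding cond_P_def by blast
lemma Ppres: "preserves_nonneg \<Gamma>" using P unfolding cond_P_def by blast
lemma Pmono: "0 \<le> s \<Longrightarrow> s \<le> t1 \<Longrightarrow> t1 \<le> t2 \<Longrightarrow> \<Gamma> t2 s \<le> \<Gamma> t1 s" using P unfolding cond_P_def by blast

definition DT :: "(real \<times> real) set" where "DT = ({0..T} \<times> {0..T}) \<inter> {p. snd p \<le> fst p}"

lemma DT_iff: "(t, s) \<in> DT \<longleftrightarrow> 0 \<le> s \<and> s \<le> t \<and> t \<le> T"
  unfolding DT_def by auto

lemma compact_DT: "compact DT"
  unfolding DT_def
  by (intro compact_Int_closed compact_Times compact_Icc closed_Collect_le continuous_intros)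

lemma DT_Delta: "DT \<subseteq> Delta" unfolding DT_def Delta_def by auto

lemma cGam: "continuous_on DT (\<lambda>p. \<Gamma> (fst p) (snd p))"
proof -
  have "continuous_on DT (\<lambda>(t, s). \<Gamma> t s)" by (rule continuous_on_subset[OF Pc DT_Delta])
  then show ?thesis by (simp add: case_prod_beta)
qed

lemma cGam1: "0 \<le> t \<Longrightarrow> t \<le> T \<Longrightarrow> continuous_on {0..t} (\<lambda>s. \<Gamma> t s)"
proof -
  assume t: "0 \<le> t" "t \<le> T"
  have "continuous_on {0..t} (\<lambda>s. (\<lambda>p. \<Gamma> (fst p) (snd p)) (t, s))"
  proof (rule continuous_on_compose2[OF cGam])
    show "continuous_on {0..t} (\<lambda>s. (t, s))" by (intro continuous_intros)
    show "(\<lambda>s. (t, s)) ` {0..t} \<subseteq> DT" using t by (auto simp: DT_iff)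
  qed
  then show ?thesis by simp
qed

definition \<phi> where "\<phi> s = F s + G s *v X s" for s

lemma c\<phi>: "continuous_on {0..T} \<phi>"
  unfolding \<phi>_def by (intro continuous_intros continuous_on_mv cF cG cX)

definition BG where "BG = (SOME B. B > 0 \<and> (\<forall>p\<in>DT. norm (\<Gamma> (fst p) (snd p)) \<le> B))"
lemma BG: "BG > 0" "\<And>t s. 0 \<le> s \<Longrightarrow> s \<le> t \<Longrightarrow> t \<le> T \<Longrightarrow> \<Gamma> t s \<le> BG"
proof -
  have "bounded ((\<lambda>p. \<Gamma> (fst p) (snd p)) ` DT)"
    by (intro compact_imp_bounded compact_continuous_image cGam compact_DT)
  then obtain B where "B > 0" "\<forall>x\<in>(\<lambda>p. \<Gamma> (fst p) (snd p)) ` DT. norm x \<le> B" unfolding bounded_pos by blast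
  then have "\<exists>B. B > 0 \<and> (\<forall>p\<in>DT. norm (\<Gamma> (fst p) (snd p)) \<le> B)" by (intro exI[of _ B]) auto
  then have *: "BG > 0 \<and> (\<forall>p\<in>DT. norm (\<Gamma> (fst p) (snd p)) \<le> BG)" unfolding BG_def by (rule someI_ex)
  then show "BG > 0" by auto
  fix t s assume "0 \<le> s" "s \<le> t" "t \<le> T"
  then have "(t, s) \<in> DT" by (simp add: DT_iff)
  then show "\<Gamma> t s \<le> BG" using * by force
qed

definition Gb where "Gb = (SOME B. B > 0 \<and> (\<forall>t\<in>{0..T}. norm (mnorm (G t)) \<le> B))"
lemma Gb: "Gb > 0" "\<And>t. t \<in> {0..T} \<Longrightarrow> mnorm (G t) \<le> Gb"
proof -
  obtain B where "B > 0" "\<And>t. t \<in> {0..T} \<Longrightarrow> norm (mnorm (G t)) \<le> B"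
    using cont_bound[OF continuous_on_mnorm[OF cG]] by blast
  then have "\<exists>B. B > 0 \<and> (\<forall>t\<in>{0..T}. norm (mnorm (G t)) \<le> B)" by blast
  then have "Gb > 0 \<and> (\<forall>t\<in>{0..T}. norm (mnorm (G t)) \<le> Gb)" unfolding Gb_def by (rule someI_ex)
  then show "Gb > 0" "\<And>t. t \<in> {0..T} \<Longrightarrow> mnorm (G t) \<le> Gb" by (auto simp: abs_le_iff)
qed

definition Pb where "Pb = (SOME B. B > 0 \<and> (\<forall>t\<in>{0..T}. norm (\<phi> t) \<le> B))"
lemma Pb: "Pb > 0" "\<And>t. t \<in> {0..T} \<Longrightarrow> norm (\<phi> t) \<le> Pb"
proof -
  obtain B where "B > 0" "\<And>t. t \<in> {0..T} \<Longrightarrow> norm (\<phi> t) \<le> B"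
    using cont_bound[OF c\<phi>] by blast
  then have "\<exists>B. B > 0 \<and> (\<forall>t\<in>{0..T}. norm (\<phi> t) \<le> B)" by blast
  then have "Pb > 0 \<and> (\<forall>t\<in>{0..T}. norm (\<phi> t) \<le> Pb)" unfolding Pb_def by (rule someI_ex)
  then show "Pb > 0" "\<And>t. t \<in> {0..T} \<Longrightarrow> norm (\<phi> t) \<le> Pb" by auto
qed

definition tk :: "real \<Rightarrow> nat \<Rightarrow> real" where "tk h k = real k * h"
definition ck where "ck h k = \<Gamma> (tk h k) (tk h k)"
definition rho :: "real \<Rightarrow> nat \<Rightarrow> real" where
  "rho h = srec (\<lambda>k p. (1 - (\<Sum>j<k. p j * \<Gamma> (tk h k) (tk h j))) / ck h k)"
definition xx where "xx h j y = rho h j *\<^sub>R v + h *\<^sub>R (F (tk h j) + G (tk h j) *v y)"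
definition bv where "bv h k p = (\<Sum>j<k. \<Gamma> (tk h k) (tk h j) *\<^sub>R xx h j (p j)) + ck h k *\<^sub>R (rho h k *\<^sub>R v + h *\<^sub>R F (tk h k))"
definition Sq :: "real \<Rightarrow> nat \<Rightarrow> real^'d" where
  "Sq h = srec (\<lambda>k p. lsolve (ck h k * h) (G (tk h k)) (bv h k p))"

lemma rho_eq: "rho h k = (1 - (\<Sum>j<k. rho h j * \<Gamma> (tk h k) (tk h j))) / ck h k"
  unfolding rho_def by (rule srec_eq) (intro arg_cong2[where f="(/)"] refl arg_cong2[where f="(-)"] sum.cong, auto)

lemma Sq_eq: "Sq h k = lsolve (ck h k * h) (G (tk h k)) (bv h k (Sq h))"
  unfolding Sq_def
proof (rule srec_eq)
  fix p q :: "nat \<Rightarrow> real^'d" assume "\<And>j. j < k \<Longrightarrow> p j = q j"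
  then have "bv h k p = bv h k q" unfolding bv_def by (auto intro!: sum.cong)
  then show "lsolve (ck h k * h) (G (tk h k)) (bv h k p) = lsolve (ck h k * h) (G (tk h k)) (bv h k q)" by simp
qed

context
  fixes h :: real
  assumes h0: "h > 0" and hs: "h * BG * Gb < 1/4"
begin

lemma tk0: "0 \<le> tk h k" using h0 unfolding tk_def by simp
lemma tk_mono: "j \<le> k \<Longrightarrow> tk h j \<le> tk h k" using h0 unfolding tk_def by (simp add: mult_right_mono)
lemma ck0: "0 < ck h k" unfolding ck_def by (rule Pdiag[OF tk0])

lemma rho_sum: "(\<Sum>j\<le>k. rho h j * \<Gamma> (tk h k) (tk h j)) = 1"
proof -
  have "(\<Sum>j\<le>k. rho h j * \<Gamma> (tk h k) (tk h j)) = (\<Sum>j<k. rho h j * \<Gamma> (tk h k) (tk h j)) + rho h k * ck h k"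
    by (simp add: lessThan_Suc_atMost[symmetric] ck_def)
  also have "rho h k * ck h k = 1 - (\<Sum>j<k. rho h j * \<Gamma> (tk h k) (tk h j))"
    using ck0[of k] by (subst rho_eq) simp
  finally show ?thesis by simp
qed

lemma rho_nonneg: "0 \<le> rho h k"
proof (induction k rule: less_induct)
  case (less k)
  show ?case
  proof (cases k)
    case 0 then show ?thesis using ck0[of 0] by (subst rho_eq) simp
  next
    case (Suc m)
    have "(\<Sum>j<k. rho h j * \<Gamma> (tk h k) (tk h j)) \<le> (\<Sum>j\<le>m. rho h j * \<Gamma> (tk h m) (tk h j))"
      unfolding Suc lessThan_Suc_atMost
    proof (rule sum_mono)
      fix j assume "j \<in> {..m}"
      then have j: "j \<le> m" by simp
      have "\<Gamma> (tk h (Suc m)) (tk h j) \<le> \<Gamma> (tk h m) (tk h j)"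
        by (rule Pmono[OF tk0 tk_mono[OF j] tk_mono]) simp
      then show "rho h j * \<Gamma> (tk h (Suc m)) (tk h j) \<le> rho h j * \<Gamma> (tk h m) (tk h j)"
        using less.IH[of j] j Suc by (intro mult_left_mono) auto
    qed
    then have "(\<Sum>j<k. rho h j * \<Gamma> (tk h k) (tk h j)) \<le> 1" using rho_sum[of m] by simp
    then show ?thesis using ck0[of k] by (subst rho_eq) simp
  qed
qed

lemma valid_small:
  assumes "tk h k \<le> T"
  shows "2 * (ck h k * h * mnorm (G (tk h k))) < 1" "0 \<le> ck h k * h"
proof -
  have "ck h k \<le> BG" unfolding ck_def by (rule BG(2)[OF tk0 order_refl assms])
  moreover have "mnorm (G (tk h k)) \<le> Gb" using Gb(2)[of "tk h k"] tk0 assms by auto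
  ultimately have "ck h k * h * mnorm (G (tk h k)) \<le> BG * h * Gb"
    using ck0[of k] h0 mnorm_nonneg by (intro mult_mono mult_right_mono) auto
  then show "2 * (ck h k * h * mnorm (G (tk h k))) < 1" using hs by (simp add: mult_ac)
  show "0 \<le> ck h k * h" using ck0[of k] h0 by simp
qed

lemma Sq_fix:
  assumes "tk h k \<le> T"
  shows "Sq h k = bv h k (Sq h) + (ck h k * h) *\<^sub>R (G (tk h k) *v Sq h k)"
proof -
  have "lsolve (ck h k * h) (G (tk h k)) (bv h k (Sq h)) = bv h k (Sq h) + (ck h k * h) *\<^sub>R (G (tk h k) *v lsolve (ck h k * h) (G (tk h k)) (bv h k (Sq h)))"
    by (rule lsolve_eq) (use valid_small[OF assms] in auto)
  then show ?thesis by (subst (1 2) Sq_eq) simp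
qed

lemma Sq_rep:
  assumes "tk h k \<le> T"
  shows "Sq h k = (\<Sum>j\<le>k. \<Gamma> (tk h k) (tk h j) *\<^sub>R xx h j (Sq h j))"
proof -
  have "(\<Sum>j\<le>k. \<Gamma> (tk h k) (tk h j) *\<^sub>R xx h j (Sq h j)) = (\<Sum>j<k. \<Gamma> (tk h k) (tk h j) *\<^sub>R xx h j (Sq h j)) + ck h k *\<^sub>R xx h k (Sq h k)"
    by (simp add: lessThan_Suc_atMost[symmetric] ck_def)
  also have "\<dots> = bv h k (Sq h) + (ck h k * h) *\<^sub>R (G (tk h k) *v Sq h k)"
    unfolding bv_def xx_def by (simp add: scaleR_add_right algebra_simps)
  finally show ?thesis using Sq_fix[OF assms] by simp
qed

lemma Sq_disc:
  assumes "tk h k \<le> T"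
  shows "Sq h k = v + h *\<^sub>R (\<Sum>j\<le>k. \<Gamma> (tk h k) (tk h j) *\<^sub>R (F (tk h j) + G (tk h j) *v Sq h j))"
proof -
  have "Sq h k = (\<Sum>j\<le>k. (rho h j * \<Gamma> (tk h k) (tk h j)) *\<^sub>R v) + (\<Sum>j\<le>k. h *\<^sub>R (\<Gamma> (tk h k) (tk h j) *\<^sub>R (F (tk h j) + G (tk h j) *v Sq h j)))"
    unfolding Sq_rep[OF assms] xx_def by (simp add: scaleR_add_right sum.distrib algebra_simps)
  also have "(\<Sum>j\<le>k. (rho h j * \<Gamma> (tk h k) (tk h j)) *\<^sub>R v) = v"
    using rho_sum[of k] by (simp add: scaleR_sum_left[symmetric])
  finally show ?thesis by (simp add: scaleR_sum_right)
qed

lemma Sq_nonneg: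
  assumes "tk h k \<le> T"
  shows "0 \<le> Sq h k $ i"
  using assms
proof (induction k arbitrary: i rule: less_induct)
  case (less k)
  have valid: "tk h k \<le> T" by (rule less.prems)
  have A0: "0 \<le> (\<Sum>j<k. \<Gamma> (tk h k) (tk h j) *\<^sub>R xx h j (Sq h j)) $ i" for i
  proof -
    let ?x = "\<lambda>j. xx h j (Sq h j) $ i"
    have prem: "(\<forall>j<k. 0 \<le> tk h j \<and> tk h j < T) \<and> (\<forall>j. Suc j < k \<longrightarrow> tk h j < tk h (Suc j)) \<and>
        (\<forall>j<k. 0 \<le> (\<Sum>j'\<le>j. ?x j' * \<Gamma> (tk h j) (tk h j')))"
    proof (intro conjI allI impI)
      fix j assume j: "j < k"
      show "0 \<le> tk h j" by (rule tk0)
      show "tk h j < T" using j h0 valid unfolding tk_def by (smt (verit) mult_strict_right_mono of_nat_less_iff)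
      have vj: "tk h j \<le> T" using tk_mono[of j k] j valid by simp
      have "Sq h j $ i = (\<Sum>j'\<le>j. ?x j' * \<Gamma> (tk h j) (tk h j'))"
        by (subst Sq_rep[OF vj]) (simp add: mult.commute)
      then show "0 \<le> (\<Sum>j'\<le>j. ?x j' * \<Gamma> (tk h j) (tk h j'))" using less.IH[OF j vj, of i] by simp
    next
      fix j assume "Suc j < k"
      show "tk h j < tk h (Suc j)" using h0 unfolding tk_def by (simp add: algebra_simps)
    qed
    have pre: "\<forall>t\<in>{0..T}. 0 \<le> (\<Sum>j\<in>{j. j < k \<and> tk h j \<le> t}. ?x j * \<Gamma> t (tk h j))"
      by (rule Ppres[unfolded preserves_nonneg_def, THEN spec[of _ T], THEN spec[of _ k], THEN spec[of _ ?x], THEN spec[of _ "tk h"], THEN mp, OF prem])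
    have "{j. j < k \<and> tk h j \<le> tk h k} = {..<k}" using tk_mono by auto
    then have "0 \<le> (\<Sum>j<k. ?x j * \<Gamma> (tk h k) (tk h j))"
      using pre[rule_format, of "tk h k"] tk0[of k] valid by simp
    then show ?thesis by (simp add: mult.commute)
  qed
  have tkT: "tk h k \<in> {0..T}" using tk0[of k] valid by simp
  have b0: "0 \<le> bv h k (Sq h) $ i" for i
  proof -
    have "0 \<le> (ck h k *\<^sub>R (rho h k *\<^sub>R v + h *\<^sub>R F (tk h k))) $ i"
      using ck0[of k] rho_nonneg[of k] v0 F0 tkT h0 by simp
    then show ?thesis unfolding bv_def using A0[of i] by simp
  qed
  have "0 \<le> lsolve (ck h k * h) (G (tk h k)) (bv h k (Sq h)) $ i"
  proof (rule lsolve_nonneg)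
    show "0 \<le> ck h k * h" "2 * (ck h k * h * mnorm (G (tk h k))) < 1" using valid_small[OF valid] by auto
    show "\<And>i j. i \<noteq> j \<Longrightarrow> 0 \<le> G (tk h k) $ i $ j" using G0 tkT by blast
    show "\<And>i. 0 \<le> bv h k (Sq h) $ i" by (rule b0)
  qed
  then show ?case by (subst Sq_eq)
qed

end

end

context pscheme
begin

lemma phi_eq: "(\<lambda>s. F s + G s *v X s) = \<phi>" by (simp add: \<phi>_def fun_eq_iff)

lemma X_int:
  assumes t: "0 \<le> t" "t \<le> T"
  shows "X t = v + integral {0..t} (\<lambda>s. \<Gamma> t s *\<^sub>R \<phi> s)"
proof -
  have cf: "continuous_on {0..t} (\<lambda>s. \<Gamma> t s *\<^sub>R \<phi> s)"
    by (intro continuous_intros cGam1 t continuous_on_subset[OF c\<phi>]) (use t in auto)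
  have "set_integrable lborel {0..t} (\<lambda>s. \<Gamma> t s *\<^sub>R \<phi> s)"
    unfolding set_integrable_def by (rule borel_integrable_compact[OF compact_Icc cf])
  then have "VI \<Gamma> \<phi> t = integral {0..t} (\<lambda>s. \<Gamma> t s *\<^sub>R \<phi> s)"
    unfolding VI_def by (rule set_borel_integral_eq_integral(2))
  then show ?thesis using sol t unfolding phi_eq by auto
qed

lemma err:
  assumes h0: "h > 0" and hs: "h * BG * Gb < 1/4" and eu0: "0 \<le> eu"
    and osc: "\<And>t s s'. 0 \<le> s \<Longrightarrow> s \<le> t \<Longrightarrow> t \<le> T \<Longrightarrow> 0 \<le> s' \<Longrightarrow> s' \<le> t \<Longrightarrow> \<bar>s - s'\<bar> \<le> h \<Longrightarrow>
        norm (\<Gamma> t s *\<^sub>R \<phi> s - \<Gamma> t s' *\<^sub>R \<phi> s') \<le> eu"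
    and valid: "tk h k \<le> T"
  shows "norm (X (tk h k) - Sq h k) \<le> (T * eu + h * BG * Pb) + h * BG * Gb * (\<Sum>j\<le>k. norm (X (tk h j) - Sq h j))"
proof -
  define t where "t = tk h k"
  define f where "f s = \<Gamma> t s *\<^sub>R \<phi> s" for s
  have t0: "0 \<le> t" "t \<le> T" using tk0[OF h0 hs] valid unfolding t_def by auto
  have tj: "tk h j \<le> t" "0 \<le> tk h j" "tk h j \<le> T" if "j \<le> k" for j
    using tk_mono[OF h0 hs that] tk0[OF h0 hs] valid unfolding t_def by auto
  have cf: "continuous_on {0..t} f"
    unfolding f_def by (intro continuous_intros cGam1 t0 continuous_on_subset[OF c\<phi>]) (use t0 in auto)
  have Xt: "X t = v + integral {0..t} f" unfolding f_def by (rule X_int[OF t0])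
  have R: "norm (integral {0..real k * h} f - h *\<^sub>R (\<Sum>j<k. f (real j * h))) \<le> real k * h * eu"
  proof (rule riemann_err[OF h0])
    show "continuous_on {0..real k * h} f" using cf unfolding t_def tk_def .
    fix j s assume j: "j < k" and s: "s \<in> {real j * h..real (Suc j) * h}"
    have "real (Suc j) * h \<le> real k * h" using j h0 by (intro mult_right_mono) auto
    then have "s \<le> t" using s unfolding t_def tk_def by auto
    moreover have "real j * h \<le> t" using tj[of j] j unfolding tk_def by auto
    moreover have "\<bar>s - real j * h\<bar> \<le> h" using s by (auto simp: algebra_simps)
    moreover have "0 \<le> real j * h" "0 \<le> s" using h0 s by (auto intro: order_trans[OF mult_nonneg_nonneg[of "real j" h]])
    ultimately show "norm (f s - f (real j * h)) \<le> eu"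
      unfolding f_def using osc t0 by blast
  qed
  have kh: "real k * h * eu \<le> T * eu" using valid eu0 unfolding tk_def by (intro mult_right_mono) auto
  define e where "e j = X (tk h j) - Sq h j" for j
  have Sk: "Sq h k = v + h *\<^sub>R (\<Sum>j\<le>k. \<Gamma> t (tk h j) *\<^sub>R (F (tk h j) + G (tk h j) *v Sq h j))"
    unfolding t_def by (rule Sq_disc[OF h0 hs valid])
  have sp: "\<Gamma> t (tk h j) *\<^sub>R (F (tk h j) + G (tk h j) *v Sq h j) = f (tk h j) - \<Gamma> t (tk h j) *\<^sub>R (G (tk h j) *v e j)" for j
    unfolding f_def e_def \<phi>_def by (simp add: matrix_vector_mult_diff_distrib algebra_simps)
  have fs: "(\<Sum>j\<le>k. f (tk h j)) = (\<Sum>j<k. f (real j * h)) + f t"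
    by (simp add: lessThan_Suc_atMost[symmetric] t_def tk_def)
  have eq: "X t - Sq h k = (integral {0..real k * h} f - h *\<^sub>R (\<Sum>j<k. f (real j * h))) - h *\<^sub>R f t
      + h *\<^sub>R (\<Sum>j\<le>k. \<Gamma> t (tk h j) *\<^sub>R (G (tk h j) *v e j))"
    unfolding Xt Sk sp sum_subtractf fs by (simp add: t_def tk_def algebra_simps scaleR_add_right scaleR_diff_right)
  have n2: "norm (h *\<^sub>R f t) \<le> h * BG * Pb"
  proof -
    have "norm (f t) = \<bar>\<Gamma> t t\<bar> * norm (\<phi> t)" unfolding f_def by simp
    also have "\<dots> \<le> BG * Pb"
      using BG(2)[OF t0(1) order_refl t0(2)] Pnn[OF t0(1) order_refl] Pb(2)[of t] t0 BG(1)
      by (intro mult_mono) auto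
    finally show ?thesis using h0 by (simp add: mult.assoc mult_left_mono)
  qed
  have n3: "norm (h *\<^sub>R (\<Sum>j\<le>k. \<Gamma> t (tk h j) *\<^sub>R (G (tk h j) *v e j))) \<le> h * BG * Gb * (\<Sum>j\<le>k. norm (e j))"
  proof -
    have "norm (\<Sum>j\<le>k. \<Gamma> t (tk h j) *\<^sub>R (G (tk h j) *v e j)) \<le> (\<Sum>j\<le>k. norm (\<Gamma> t (tk h j) *\<^sub>R (G (tk h j) *v e j)))"
      by (rule norm_sum)
    also have "\<dots> \<le> (\<Sum>j\<le>k. BG * Gb * norm (e j))"
    proof (rule sum_mono)
      fix j assume "j \<in> {..k}"
      then have j: "j \<le> k" by simp
      have "norm (\<Gamma> t (tk h j) *\<^sub>R (G (tk h j) *v e j)) = \<bar>\<Gamma> t (tk h j)\<bar> * norm (G (tk h j) *v e j)" by simp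
      also have "\<dots> \<le> BG * (Gb * norm (e j))"
      proof (rule mult_mono)
        show "\<bar>\<Gamma> t (tk h j)\<bar> \<le> BG" using BG(2)[OF tj(2)[OF j] tj(1)[OF j] t0(2)] Pnn[OF tj(2)[OF j] tj(1)[OF j]] by simp
        have "norm (G (tk h j) *v e j) \<le> mnorm (G (tk h j)) * norm (e j)" by (rule mnorm_mult)
        also have "\<dots> \<le> Gb * norm (e j)" using Gb(2)[of "tk h j"] tj[OF j] by (intro mult_right_mono) auto
        finally show "norm (G (tk h j) *v e j) \<le> Gb * norm (e j)" .
      qed (use BG(1) in auto)
      finally show "norm (\<Gamma> t (tk h j) *\<^sub>R (G (tk h j) *v e j)) \<le> BG * Gb * norm (e j)" by (simp add: mult.assoc)
    qed
    also have "\<dots> = BG * Gb * (\<Sum>j\<le>k. norm (e j))" by (simp add: sum_distrib_left)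
    finally show ?thesis using h0 by (simp add: mult.assoc mult_left_mono)
  qed
  have "norm (X t - Sq h k) \<le> norm (integral {0..real k * h} f - h *\<^sub>R (\<Sum>j<k. f (real j * h))) + norm (h *\<^sub>R f t)
      + norm (h *\<^sub>R (\<Sum>j\<le>k. \<Gamma> t (tk h j) *\<^sub>R (G (tk h j) *v e j)))"
    unfolding eq by (rule order_trans[OF norm_triangle_ineq add_right_mono[OF norm_triangle_ineq4]])
  also have "\<dots> \<le> (T * eu + h * BG * Pb) + h * BG * Gb * (\<Sum>j\<le>k. norm (e j))"
    using R kh n2 n3 by linarith
  finally show ?thesis unfolding t_def e_def .
qed

end

context pscheme
begin

lemma X_nonneg:
  assumes t0: "t0 \<in> {0..T}"
  shows "0 \<le> X t0 $ i"
proof (rule ccontr)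
  assume neg: "\<not> 0 \<le> X t0 $ i"
  define \<epsilon> where "\<epsilon> = - X t0 $ i"
  have \<epsilon>0: "\<epsilon> > 0" using neg unfolding \<epsilon>_def by simp
  define E where "E = exp (2 * (BG * Gb) * T)"
  have E1: "E \<ge> 1" unfolding E_def using BG(1) Gb(1) T0 by simp
  define eu where "eu = \<epsilon> / (8 * E * (T + 1))"
  have eu0: "eu > 0" unfolding eu_def using \<epsilon>0 E1 T0 by simp
  define fp where "fp p = \<Gamma> (fst p) (snd p) *\<^sub>R \<phi> (snd p)" for p :: "real \<times> real"
  have cfp: "continuous_on DT fp"
  proof -
    have "continuous_on DT (\<lambda>p. \<phi> (snd p))"
      by (rule continuous_on_compose2[OF c\<phi> continuous_on_snd]) (auto simp: DT_def)
    then show ?thesis unfolding fp_def by (intro continuous_intros cGam)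
  qed
  obtain du where du: "du > 0" "\<And>p p'. p \<in> DT \<Longrightarrow> p' \<in> DT \<Longrightarrow> dist p' p < du \<Longrightarrow> dist (fp p') (fp p) < eu"
    using compact_uniformly_continuous[OF cfp compact_DT] eu0 unfolding uniformly_continuous_on_def by metis
  obtain dX where dX: "dX > 0" "\<And>s s'. s \<in> {0..T} \<Longrightarrow> s' \<in> {0..T} \<Longrightarrow> dist s' s < dX \<Longrightarrow> dist (X s') (X s) < \<epsilon> / 2"
    using compact_uniformly_continuous[OF cX compact_Icc] \<epsilon>0 unfolding uniformly_continuous_on_def
    by (metis half_gt_zero)
  define h where "h = min (min (du / 2) (dX / 2)) (min (1 / (8 * BG * Gb)) (\<epsilon> / (16 * BG * Pb * E)))"
  have BGGb: "BG * Gb > 0" using BG(1) Gb(1) by simp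
  have h0: "h > 0" unfolding h_def using du dX BG(1) Gb(1) Pb(1) E1 \<epsilon>0 by simp
  have hdu: "h < du" "h < dX" unfolding h_def using du dX by auto
  have hs: "h * BG * Gb < 1/4"
  proof -
    have "h \<le> 1 / (8 * BG * Gb)" unfolding h_def by simp
    then have "h * (BG * Gb) \<le> 1 / (8 * BG * Gb) * (BG * Gb)" using BGGb by (intro mult_right_mono) auto
    also have "\<dots> = 1/8" using BG(1) Gb(1) by (simp add: field_simps)
    finally show ?thesis by (simp add: mult.assoc)
  qed
  have hP: "h * BG * Pb * E \<le> \<epsilon> / 16"
  proof -
    have p: "BG * Pb * E > 0" using BG(1) Pb(1) E1 by simp
    have "h \<le> \<epsilon> / (16 * BG * Pb * E)" unfolding h_def by simp
    then have "h * (BG * Pb * E) \<le> \<epsilon> / (16 * BG * Pb * E) * (BG * Pb * E)" using p by (intro mult_right_mono) auto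
    also have "\<dots> = \<epsilon> / 16" using BG(1) Pb(1) E1 by (simp add: field_simps)
    finally show ?thesis by (simp add: mult.assoc)
  qed
  have osc: "norm (\<Gamma> t s *\<^sub>R \<phi> s - \<Gamma> t s' *\<^sub>R \<phi> s') \<le> eu"
    if "0 \<le> s" "s \<le> t" "t \<le> T" "0 \<le> s'" "s' \<le> t" "\<bar>s - s'\<bar> \<le> h" for t s s'
  proof -
    have m: "(t, s) \<in> DT" "(t, s') \<in> DT" using that by (auto simp: DT_iff)
    have "dist (t, s) (t, s') = \<bar>s - s'\<bar>" by (simp add: dist_Pair_Pair dist_real_def)
    then have "dist (t, s) (t, s') < du" using that hdu by simp
    then have "dist (fp (t, s)) (fp (t, s')) < eu" by (rule du(2)[OF m(2) m(1)])
    then show ?thesis unfolding fp_def dist_norm by simp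
  qed
  define k where "k = nat \<lfloor>t0 / h\<rfloor>"
  have t0': "0 \<le> t0" "t0 \<le> T" using t0 by auto
  have rk: "real k = of_int \<lfloor>t0 / h\<rfloor>" unfolding k_def using t0' h0 by simp
  have kh: "real k * h \<le> t0"
  proof -
    have "real k \<le> t0 / h" unfolding rk by simp
    then show ?thesis using h0 by (simp add: pos_le_divide_eq)
  qed
  have kh2: "t0 < real k * h + h"
  proof -
    have "t0 / h < real k + 1" unfolding rk by linarith
    then show ?thesis using h0 by (simp add: pos_divide_less_eq algebra_simps)
  qed
  have valid: "tk h k \<le> T" using kh t0' unfolding tk_def by simp
  define a where "a j = norm (X (tk h j) - Sq h j)" for j
  define q where "q = T * eu + h * BG * Pb"
  have q0: "0 \<le> q" unfolding q_def using T0 eu0 h0 BG(1) Pb(1) by simp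
  have ak: "a k \<le> 2 * q * (1 + 2 * (h * BG * Gb))^k"
  proof (rule disc_gronwall[where V="\<lambda>j. tk h j \<le> T"])
    show "\<And>j. 0 \<le> a j" unfolding a_def by simp
    show "\<And>j k. tk h k \<le> T \<Longrightarrow> j \<le> k \<Longrightarrow> tk h j \<le> T" using tk_mono[OF h0 hs] by (meson order_trans)
    show "a j \<le> q + h * BG * Gb * (\<Sum>j\<le>j. a j)" if "tk h j \<le> T" for j
      unfolding a_def q_def by (rule err[OF h0 hs less_imp_le[OF eu0] osc that])
    show "0 \<le> h * BG * Gb" using h0 BG(1) Gb(1) by simp
    show "h * BG * Gb \<le> 1/2" using hs by simp
  qed (use q0 valid in auto)
  also have "\<dots> \<le> 2 * q * E"
  proof -
    have "(1 + 2 * (h * BG * Gb))^k \<le> exp (real k * (2 * (h * BG * Gb)))"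
      by (rule pow_le_exp) (use h0 BGGb in simp)
    also have "\<dots> \<le> E" unfolding E_def
    proof (subst exp_le_cancel_iff)
      have "real k * h \<le> T" using valid unfolding tk_def .
      then have "(real k * h) * (2 * (BG * Gb)) \<le> T * (2 * (BG * Gb))" using BGGb by (intro mult_right_mono) auto
      then show "real k * (2 * (h * BG * Gb)) \<le> 2 * (BG * Gb) * T" by (simp add: mult_ac)
    qed
    finally show ?thesis using q0 by (intro mult_left_mono) auto
  qed
  also have "\<dots> < \<epsilon> / 2"
  proof -
    have e: "eu * (8 * E * (T + 1)) = \<epsilon>" unfolding eu_def using E1 T0 by simp
    have e2: "eu * (8 * E * (T + 1)) = 8 * (T * eu * E) + 8 * (eu * E)" by (simp add: algebra_simps)
    have e3: "0 \<le> eu * E" using eu0 E1 by simp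
    have "2 * (T * eu) * E \<le> \<epsilon> / 4" using e e2 e3 by (simp add: algebra_simps)
    moreover have "2 * (h * BG * Pb) * E \<le> \<epsilon> / 8" using hP by simp
    ultimately show ?thesis unfolding q_def using \<epsilon>0 by (simp add: algebra_simps)
  qed
  finally have akl: "a k < \<epsilon> / 2" .
  have S0: "0 \<le> Sq h k $ i" by (rule Sq_nonneg[OF h0 hs valid])
  have "\<bar>(X (tk h k) - Sq h k) $ i\<bar> \<le> a k" unfolding a_def by (rule component_le_norm_cart)
  then have x1: "X (tk h k) $ i > - (\<epsilon> / 2)" using S0 akl by simp
  have tkm: "tk h k \<in> {0..T}" using valid tk0[OF h0 hs] by simp
  have "dist t0 (tk h k) < dX" using kh kh2 hdu unfolding tk_def dist_real_def by simp
  then have "dist (X t0) (X (tk h k)) < \<epsilon> / 2" by (rule dX(2)[OF tkm t0])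
  then have "\<bar>(X t0 - X (tk h k)) $ i\<bar> < \<epsilon> / 2" unfolding dist_norm using component_le_norm_cart le_less_trans by blast
  then have c: "(X t0 - X (tk h k)) $ i < \<epsilon> / 2 \<and> - ((X t0 - X (tk h k)) $ i) < \<epsilon> / 2" by (simp only: abs_less_iff)
  have c2: "- ((X t0 - X (tk h k)) $ i) < \<epsilon> / 2" using c by (rule conjunct2)
  have c3: "(X t0 - X (tk h k)) $ i = X t0 $ i - X (tk h k) $ i" by simp
  show False using c2 c3 x1 unfolding \<epsilon>_def by linarith
qed

end

lemma sq_add_le: "(norm (x + y :: 'a::real_normed_vector))\<^sup>2 \<le> 2 * (norm x)\<^sup>2 + 2 * (norm y)\<^sup>2"
proof -
  have "norm (x + y) \<le> norm x + norm y" by (rule norm_triangle_ineq)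
  then have "(norm (x + y))\<^sup>2 \<le> (norm x + norm y)\<^sup>2" by (intro power_mono) auto
  also have "\<dots> \<le> 2 * (norm x)\<^sup>2 + 2 * (norm y)\<^sup>2"
    using sum_squares_ge_zero[of "norm x - norm y" 0] by (simp add: power2_eq_square algebra_simps)
  finally show ?thesis .
qed

locale approx =
  fixes \<Gamma> :: "real \<Rightarrow> real \<Rightarrow> real" and GM :: "nat \<Rightarrow> real \<Rightarrow> real \<Rightarrow> real"
    and T \<eta> \<gamma> \<eta>' \<gamma>' :: real
    and v :: "real^'d" and F :: "real \<Rightarrow> real^'d" and G :: "real \<Rightarrow> real^'d^'d"
    and Y :: "real \<Rightarrow> real^'d" and YM :: "nat \<Rightarrow> real \<Rightarrow> real^'d"
  assumes V1: "vsetup \<Gamma> T \<eta> \<gamma> F G" and V2: "\<And>M. vsetup (GM M) T \<eta>' \<gamma>' F G"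
    and L2: "\<And>t. t \<in> {0..T} \<Longrightarrow> ((\<lambda>M. \<integral>\<^sup>+ s\<in>{0..t}. ennreal ((\<Gamma> t s - GM M t s)\<^sup>2) \<partial>lborel) \<longlongrightarrow> 0) sequentially"
    and cY: "continuous_on {0..T} Y" and sY: "\<And>t. t \<in> {0..T} \<Longrightarrow> Y t = Phi \<Gamma> v F G Y t"
    and cYM: "\<And>M. continuous_on {0..T} (YM M)"
    and sYM: "\<And>M t. t \<in> {0..T} \<Longrightarrow> YM M t = Phi (GM M) v F G (YM M) t"
begin

lemma K1: "goodK \<Gamma> T \<eta> \<gamma>" using V1 unfolding vsetup_def by blast
lemma K2: "goodK (GM M) T \<eta>' \<gamma>'" using V2 unfolding vsetup_def by blast
lemma T0: "0 \<le> T" using V1 unfolding vsetup_def by blast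

definition \<phi> where "\<phi> s = F s + G s *v Y s" for s
lemma c\<phi>: "continuous_on {0..T} \<phi>" unfolding \<phi>_def by (rule vsetup.phi_cont[OF V1 cY])

definition a where "a M t = Phi (GM M) v F G Y t - Phi \<Gamma> v F G Y t" for M t
definition \<alpha> where "\<alpha> M t = (norm (a M t))\<^sup>2" for M t

lemma a_VI: "a M t = VI (GM M) \<phi> t - VI \<Gamma> \<phi> t"
  unfolding a_def Phi_def \<phi>_def by simp

lemma c\<alpha>: "continuous_on {0..T} (\<alpha> M)"
  unfolding \<alpha>_def a_def by (intro continuous_intros vsetup.Phi_cont[OF V1 cY] vsetup.Phi_cont[OF V2 cY])

lemma \<alpha>_nonneg: "0 \<le> \<alpha> M t" unfolding \<alpha>_def by simp

definition Ab where "Ab = 2 * (\<eta>' * T powr (2 * \<gamma>') * integral {0..T} (\<lambda>s. (norm (\<phi> s))\<^sup>2))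
   + 2 * (\<eta> * T powr (2 * \<gamma>) * integral {0..T} (\<lambda>s. (norm (\<phi> s))\<^sup>2))"

lemma \<alpha>_bound:
  assumes t: "t \<in> {0..T}"
  shows "\<alpha> M t \<le> Ab"
proof -
  have c': "continuous_on {0..t} \<phi>" by (rule continuous_on_subset[OF c\<phi>]) (use t in auto)
  have I: "integral {0..t} (\<lambda>s. (norm (\<phi> s))\<^sup>2) \<le> integral {0..T} (\<lambda>s. (norm (\<phi> s))\<^sup>2)"
    by (rule integral_subset_le) (use t in \<open>auto intro!: integrable_continuous_interval continuous_intros c\<phi> c'\<close>)
  have b1: "(norm (VI (GM M) \<phi> t))\<^sup>2 \<le> \<eta>' * T powr (2 * \<gamma>') * integral {0..T} (\<lambda>s. (norm (\<phi> s))\<^sup>2)"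
    using VI_bound(2)[OF K2 c'] t goodK_pos[OF K2] I by (smt (verit) atLeastAtMost_iff mult_left_mono powr_ge_zero mult_nonneg_nonneg)
  have b2: "(norm (VI \<Gamma> \<phi> t))\<^sup>2 \<le> \<eta> * T powr (2 * \<gamma>) * integral {0..T} (\<lambda>s. (norm (\<phi> s))\<^sup>2)"
    using VI_bound(2)[OF K1 c'] t goodK_pos[OF K1] I by (smt (verit) atLeastAtMost_iff mult_left_mono powr_ge_zero mult_nonneg_nonneg)
  have "\<alpha> M t \<le> 2 * (norm (VI (GM M) \<phi> t))\<^sup>2 + 2 * (norm (- VI \<Gamma> \<phi> t))\<^sup>2"
    unfolding \<alpha>_def a_VI using sq_add_le[of "VI (GM M) \<phi> t" "- VI \<Gamma> \<phi> t"] by simp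
  then show ?thesis unfolding Ab_def using b1 b2 by simp
qed

lemma \<alpha>_lim:
  assumes t: "t \<in> {0..T}"
  shows "(\<lambda>M. \<alpha> M t) \<longlonglongrightarrow> 0"
proof -
  define I where "I M = (\<integral>\<^sup>+ s\<in>{0..t}. ennreal ((\<Gamma> t s - GM M t s)\<^sup>2) \<partial>lborel)" for M
  define C where "C = integral {0..t} (\<lambda>s. (norm (\<phi> s))\<^sup>2)"
  have t0: "0 \<le> t" "t \<le> T" using t by auto
  have c': "continuous_on {0..t} \<phi>" by (rule continuous_on_subset[OF c\<phi>]) (use t in auto)
  have LI: "I \<longlonglongrightarrow> 0" unfolding I_def by (rule L2[OF t])
  have ev: "eventually (\<lambda>M. I M < 1) sequentially" using order_tendstoD(2)[OF LI] by simp
  have bnd: "\<alpha> M t \<le> enn2real (I M) * C" if IM: "I M < 1" for M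
  proof -
    have fin: "I M \<noteq> \<infinity>" using IM by auto
    have mg: "set_borel_measurable lborel {0..t} (\<lambda>s. GM M t s - \<Gamma> t s)"
    proof -
      have m1: "set_borel_measurable lborel {0..t} (GM M t)" by (rule goodK_meas[OF K2 t0(1) order_refl t0(2) order_refl])
      have m2: "set_borel_measurable lborel {0..t} (\<Gamma> t)" by (rule goodK_meas[OF K1 t0(1) order_refl t0(2) order_refl])
      have e: "(\<lambda>x. indicator {0..t} x *\<^sub>R (GM M t x - \<Gamma> t x)) = (\<lambda>x. indicator {0..t} x *\<^sub>R GM M t x - indicator {0..t} x *\<^sub>R \<Gamma> t x)"
        by (auto simp: algebra_simps)
      show ?thesis using m1 m2 unfolding set_borel_measurable_def e by measurable
    qed
    have gb: "(\<integral>\<^sup>+ u\<in>{0..t}. ennreal ((GM M t u - \<Gamma> t u)\<^sup>2) \<partial>lborel) \<le> ennreal (enn2real (I M))"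
    proof -
      have "(\<integral>\<^sup>+ u\<in>{0..t}. ennreal ((GM M t u - \<Gamma> t u)\<^sup>2) \<partial>lborel) = I M"
        unfolding I_def by (simp add: power2_commute)
      then show ?thesis using fin by (simp add: ennreal_enn2real_if)
    qed
    have "(norm (LINT s:{0..t}|lborel. (GM M t s - \<Gamma> t s) *\<^sub>R \<phi> s))\<^sup>2 \<le> enn2real (I M) * C"
      unfolding C_def by (rule kern_bound(2)[OF mg c' gb]) simp
    moreover have "(LINT s:{0..t}|lborel. (GM M t s - \<Gamma> t s) *\<^sub>R \<phi> s) = a M t"
    proof -
      have i1: "set_integrable lborel {0..t} (\<lambda>s. GM M t s *\<^sub>R \<phi> s)" by (rule VI_bound(1)[OF K2 c' t0])
      have i2: "set_integrable lborel {0..t} (\<lambda>s. \<Gamma> t s *\<^sub>R \<phi> s)" by (rule VI_bound(1)[OF K1 c' t0])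
      show ?thesis unfolding a_VI VI_def
        by (subst set_integral_diff(2)[OF i1 i2, symmetric]) (simp add: scaleR_diff_left)
    qed
    ultimately show ?thesis unfolding \<alpha>_def by simp
  qed
  have "(\<lambda>M. enn2real (I M) * C) \<longlonglongrightarrow> 0 * C"
  proof (intro tendsto_mult tendsto_const)
    show "(\<lambda>M. enn2real (I M)) \<longlonglongrightarrow> 0" using tendsto_enn2real[of I "0::real"] LI by simp
  qed
  then have l: "(\<lambda>M. enn2real (I M) * C) \<longlonglongrightarrow> 0" by simp
  show ?thesis
  proof (rule tendsto_sandwich[OF _ _ tendsto_const l])
    show "\<forall>\<^sub>F M in sequentially. 0 \<le> \<alpha> M t" by (simp add: \<alpha>_nonneg)
    show "\<forall>\<^sub>F M in sequentially. \<alpha> M t \<le> enn2real (I M) * C" using ev by (rule eventually_mono) (rule bnd)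
  qed
qed

end

context approx
begin

lemma conv:
  assumes t0: "t0 \<in> {0..T}"
  shows "(\<lambda>M. YM M t0) \<longlonglongrightarrow> Y t0"
proof -
  define Kc where "Kc = vsetup.KK T \<eta>' \<gamma>' G"
  have Kc0: "0 \<le> Kc" unfolding Kc_def by (rule vsetup.KK0[OF V2])
  define u where "u M t = (norm (YM M t - Y t))\<^sup>2" for M t
  have cu: "continuous_on {0..T} (u M)" for M unfolding u_def by (intro continuous_intros cYM cY)
  have ub: "u M t \<le> 2 * \<alpha> M t + 2 * Kc * integral {0..t} (u M)" if t: "t \<in> {0..T}" for M t
  proof -
    have "YM M t - Y t = (Phi (GM M) v F G (YM M) t - Phi (GM M) v F G Y t) + a M t"
      unfolding a_def using sYM[OF t, of M] sY[OF t] by simp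
    then have "u M t \<le> 2 * (norm (Phi (GM M) v F G (YM M) t - Phi (GM M) v F G Y t))\<^sup>2 + 2 * \<alpha> M t"
      unfolding u_def \<alpha>_def by (metis sq_add_le)
    moreover have "(norm (Phi (GM M) v F G (YM M) t - Phi (GM M) v F G Y t))\<^sup>2 \<le> Kc * integral {0..t} (u M)"
      unfolding Kc_def u_def by (rule vsetup.Phi_diff[OF V2 cYM cY t])
    ultimately show ?thesis by linarith
  qed
  define A where "A M = integral {0..T} (\<alpha> M)" for M
  have A0: "0 \<le> A M" for M unfolding A_def
    by (rule integral_nonneg) (auto intro: integrable_continuous_interval c\<alpha> \<alpha>_nonneg)
  have Alim: "A \<longlonglongrightarrow> 0"
  proof -
    have "(\<lambda>M. integral {0..T} (\<alpha> M)) \<longlonglongrightarrow> integral {0..T} (\<lambda>_. 0::real)"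
    proof (rule dominated_convergence(2)[where h="\<lambda>_. Ab"])
      show "\<And>k. \<alpha> k integrable_on {0..T}" by (rule integrable_continuous_interval[OF c\<alpha>])
      show "(\<lambda>_. Ab) integrable_on {0..T}" by (rule integrable_const_ivl)
      show "\<And>k x. x \<in> {0..T} \<Longrightarrow> norm (\<alpha> k x) \<le> Ab" using \<alpha>_bound \<alpha>_nonneg by simp
      show "\<And>x. x \<in> {0..T} \<Longrightarrow> (\<lambda>k. \<alpha> k x) \<longlonglongrightarrow> 0" by (rule \<alpha>_lim)
    qed
    then show ?thesis unfolding A_def by simp
  qed
  define U where "U M t = integral {0..t} (u M)" for M t
  have cU: "continuous_on {0..T} (U M)" for M
    unfolding U_def by (rule indefinite_integral_continuous_1[OF integrable_continuous_interval[OF cu]])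
  have Ub: "U M t \<le> 2 * A M + 2 * Kc * integral {0..t} (U M)" if t: "t \<in> {0..T}" for M t
  proof -
    have s: "{0..t} \<subseteq> {0..T}" using t by auto
    have iu: "u M integrable_on {0..t}" by (rule integrable_continuous_interval, rule continuous_on_subset[OF cu s])
    have ia: "\<alpha> M integrable_on {0..t}" by (rule integrable_continuous_interval, rule continuous_on_subset[OF c\<alpha> s])
    have iU: "U M integrable_on {0..t}" by (rule integrable_continuous_interval, rule continuous_on_subset[OF cU s])
    have "U M t \<le> integral {0..t} (\<lambda>s. 2 * \<alpha> M s + 2 * Kc * U M s)"
      unfolding U_def[of M t]
    proof (rule integral_le[OF iu])
      show "(\<lambda>s. 2 * \<alpha> M s + 2 * Kc * U M s) integrable_on {0..t}"
        using integrable_add[OF integrable_on_cmult_left[OF ia, of 2] integrable_on_cmult_left[OF iU, of "2 * Kc"]] by simp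
      show "u M s \<le> 2 * \<alpha> M s + 2 * Kc * U M s" if "s \<in> {0..t}" for s
        using ub[of s M] that t unfolding U_def by auto
    qed
    also have "\<dots> = 2 * integral {0..t} (\<alpha> M) + 2 * Kc * integral {0..t} (U M)"
    proof -
      have i2a: "(\<lambda>x. 2 * \<alpha> M x) integrable_on {0..t}" using integrable_on_cmult_left[OF ia, of 2] by simp
      have i2U: "(\<lambda>x. 2 * Kc * U M x) integrable_on {0..t}" using integrable_on_cmult_left[OF iU, of "2 * Kc"] by simp
      show ?thesis by (simp add: integral_add[OF i2a i2U])
    qed
    also have "integral {0..t} (\<alpha> M) \<le> A M" unfolding A_def
      by (rule integral_subset_le[OF s ia]) (auto intro: integrable_continuous_interval c\<alpha> \<alpha>_nonneg)
    finally show ?thesis by simp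
  qed
  have Ug: "U M t0 \<le> 2 * A M * exp (2 * Kc * T)" for M
  proof -
    have "U M t0 \<le> (2 * A M) * exp (2 * Kc * t0)"
      by (rule gronwall[OF cU Ub _ _ t0]) (use Kc0 A0 in auto)
    also have "\<dots> \<le> (2 * A M) * exp (2 * Kc * T)"
      using t0 Kc0 A0 by (intro mult_left_mono) (auto intro: mult_left_mono)
    finally show ?thesis .
  qed
  have u0: "u M t0 \<le> 2 * \<alpha> M t0 + 2 * Kc * (2 * A M * exp (2 * Kc * T))" for M
  proof -
    have "2 * Kc * U M t0 \<le> 2 * Kc * (2 * A M * exp (2 * Kc * T))" using Ug[of M] Kc0 by (intro mult_left_mono) auto
    then show ?thesis using ub[OF t0, of M] unfolding U_def by simp
  qed
  have "(\<lambda>M. 2 * \<alpha> M t0 + 2 * Kc * (2 * A M * exp (2 * Kc * T))) \<longlonglongrightarrow> 2 * 0 + 2 * Kc * (2 * 0 * exp (2 * Kc * T))"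
    by (intro tendsto_intros \<alpha>_lim[OF t0] Alim)
  then have r: "(\<lambda>M. 2 * \<alpha> M t0 + 2 * Kc * (2 * A M * exp (2 * Kc * T))) \<longlonglongrightarrow> 0" by simp
  have ul: "(\<lambda>M. u M t0) \<longlonglongrightarrow> 0"
  proof (rule tendsto_sandwich[OF _ _ tendsto_const r])
    show "\<forall>\<^sub>F M in sequentially. 0 \<le> u M t0" by (simp add: u_def)
    show "\<forall>\<^sub>F M in sequentially. u M t0 \<le> 2 * \<alpha> M t0 + 2 * Kc * (2 * A M * exp (2 * Kc * T))"
      by (rule always_eventually) (use u0 in blast)
  qed
  have "(\<lambda>M. sqrt (u M t0)) \<longlonglongrightarrow> sqrt 0" by (intro tendsto_intros ul)
  then have "(\<lambda>M. norm (YM M t0 - Y t0)) \<longlonglongrightarrow> 0" unfolding u_def by simp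
  then have "(\<lambda>M. YM M t0 - Y t0) \<longlonglongrightarrow> 0" by (rule tendsto_norm_zero_cancel)
  then show ?thesis by (rule LIM_zero_cancel)
qed

end

lemma condP_meas:
  assumes P: "cond_P \<Gamma>" and t: "0 \<le> t"
  shows "set_borel_measurable lborel {0..t} (\<Gamma> t)"
proof -
  have Pc: "continuous_on Delta (\<lambda>(t, s). \<Gamma> t s)" using P unfolding cond_P_def by blast
  have "continuous_on {0..t} (\<lambda>s. (\<lambda>(t, s). \<Gamma> t s) (t, s))"
  proof (rule continuous_on_compose2[OF Pc])
    show "continuous_on {0..t} (\<lambda>s. (t, s))" by (intro continuous_intros)
    show "(\<lambda>s. (t, s)) ` {0..t} \<subseteq> Delta" using t by (auto simp: Delta_def)
  qed
  then have c: "continuous_on {0..t} (\<Gamma> t)" by simp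
  show ?thesis unfolding set_borel_measurable_def
    using borel_measurable_continuous_on_indicator[OF _ c] by simp
qed

theorem lemmaL:
  fixes \<Gamma> :: "real \<Rightarrow> real \<Rightarrow> real" and T :: real
    and v :: "real^'d" and F :: "real \<Rightarrow> real^'d" and G :: "real \<Rightarrow> real^'d^'d"
  assumes "assumption_A \<Gamma>" and "T > 0"
    and "continuous_on {0..T} F" and "continuous_on {0..T} G"
    and "\<forall>i. 0 \<le> v $ i"
    and "\<forall>t\<in>{0..T}. \<forall>i. 0 \<le> F t $ i"
    and "\<forall>t\<in>{0..T}. \<forall>i j. i \<noteq> j \<longrightarrow> 0 \<le> G t $ i $ j"
  shows "(\<exists>X. continuous_on {0..T} X \<and> volterra_solution \<Gamma> v F G T X) \<and>
         (\<forall>X1 X2. continuous_on {0..T} X1 \<and> volterra_solution \<Gamma> v F G T X1 \<and>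
                  continuous_on {0..T} X2 \<and> volterra_solution \<Gamma> v F G T X2
                  \<longrightarrow> (\<forall>t\<in>{0..T}. X1 t = X2 t)) \<and>
         (\<forall>X. continuous_on {0..T} X \<and> volterra_solution \<Gamma> v F G T X
              \<longrightarrow> (\<forall>t\<in>{0..T}. \<forall>i. 0 \<le> X t $ i))"
proof -
  note A = assms(1)[unfolded assumption_A_def]
  have meas: "\<forall>t\<ge>0. set_borel_measurable lborel {0..t} (\<Gamma> t)" using A by blast
  obtain \<eta> \<gamma> where \<eta>\<gamma>: "\<eta> > 0" "0 < \<gamma>"
    "\<forall>s t. 0 \<le> s \<and> s \<le> t \<and> t \<le> T \<longrightarrow>
         (\<integral>\<^sup>+ u\<in>{s..t}. ennreal ((\<Gamma> t u)\<^sup>2) \<partial>lborel)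
       + (\<integral>\<^sup>+ u\<in>{0..s}. ennreal ((\<Gamma> t u - \<Gamma> s u)\<^sup>2) \<partial>lborel)
         \<le> ennreal (\<eta> * (t - s) powr (2 * \<gamma>))"
    using A unfolding cond_K_def by meson
  obtain \<Gamma>M :: "nat \<Rightarrow> real \<Rightarrow> real \<Rightarrow> real" where
    PM: "\<forall>M. cond_P (\<Gamma>M M)" and
    L2: "\<forall>t\<ge>0. ((\<lambda>M. \<integral>\<^sup>+ s\<in>{0..t}. ennreal ((\<Gamma> t s - \<Gamma>M M t s)\<^sup>2) \<partial>lborel) \<longlongrightarrow> 0) sequentially" and
    KMall: "\<forall>T. \<exists>\<eta>::real. \<exists>\<gamma>::real. \<eta> > 0 \<and> 0 < \<gamma> \<and> \<gamma> \<le> 1/2 \<and>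
         (\<forall>M s t. 0 \<le> s \<and> s \<le> t \<and> t \<le> T \<longrightarrow>
            (\<integral>\<^sup>+ u\<in>{s..t}. ennreal ((\<Gamma>M M t u)\<^sup>2) \<partial>lborel)
          + (\<integral>\<^sup>+ u\<in>{0..s}. ennreal ((\<Gamma>M M t u - \<Gamma>M M s u)\<^sup>2) \<partial>lborel)
            \<le> ennreal (\<eta> * \<bar>t - s\<bar> powr (2 * \<gamma>)))"
    using A by blast
  obtain \<eta>' \<gamma>' where \<eta>\<gamma>': "\<eta>' > 0" "0 < \<gamma>'"
    "\<forall>M s t. 0 \<le> s \<and> s \<le> t \<and> t \<le> T \<longrightarrow>
            (\<integral>\<^sup>+ u\<in>{s..t}. ennreal ((\<Gamma>M M t u)\<^sup>2) \<partial>lborel)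
          + (\<integral>\<^sup>+ u\<in>{0..s}. ennreal ((\<Gamma>M M t u - \<Gamma>M M s u)\<^sup>2) \<partial>lborel)
            \<le> ennreal (\<eta>' * \<bar>t - s\<bar> powr (2 * \<gamma>'))"
    using KMall by meson
  have K1: "goodK \<Gamma> T \<eta> \<gamma>" unfolding goodK_def using \<eta>\<gamma> meas by auto
  have K2: "goodK (\<Gamma>M M) T \<eta>' \<gamma>'" for M
    unfolding goodK_def
  proof (intro conjI ballI allI impI)
    show "\<eta>' > 0" "\<gamma>' > 0" using \<eta>\<gamma>' by auto
    fix t assume "t \<in> {0..T}"
    then show "set_borel_measurable lborel {0..t} (\<Gamma>M M t)" using condP_meas PM by auto
  next
    fix s t assume st: "0 \<le> s \<and> s \<le> t \<and> t \<le> T"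
    then show "(\<integral>\<^sup>+ u\<in>{s..t}. ennreal ((\<Gamma>M M t u)\<^sup>2) \<partial>lborel)
          + (\<integral>\<^sup>+ u\<in>{0..s}. ennreal ((\<Gamma>M M t u - \<Gamma>M M s u)\<^sup>2) \<partial>lborel)
            \<le> ennreal (\<eta>' * (t - s) powr (2 * \<gamma>'))"
      using \<eta>\<gamma>'(3) by (auto simp: abs_of_nonneg)
  qed
  have V1: "vsetup \<Gamma> T \<eta> \<gamma> F G" unfolding vsetup_def using K1 assms(2-4) by auto
  have V2: "vsetup (\<Gamma>M M) T \<eta>' \<gamma>' F G" for M unfolding vsetup_def using K2 assms(2-4) by auto
  have ex: "\<exists>X. continuous_on {0..T} X \<and> volterra_solution \<Gamma> v F G T X"
  proof -
    obtain X where X: "continuous_on {0..T} X" "\<forall>t\<in>{0..T}. X t = Phi \<Gamma> v F G X t"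
      using vsetup.existence[OF V1] by blast
    then show ?thesis using vsetup.sol_iff[OF V1 X(1)] by blast
  qed
  have un: "\<forall>X1 X2. continuous_on {0..T} X1 \<and> volterra_solution \<Gamma> v F G T X1 \<and>
                  continuous_on {0..T} X2 \<and> volterra_solution \<Gamma> v F G T X2
                  \<longrightarrow> (\<forall>t\<in>{0..T}. X1 t = X2 t)"
  proof (intro allI impI ballI)
    fix X1 X2 t assume h: "continuous_on {0..T} X1 \<and> volterra_solution \<Gamma> v F G T X1 \<and>
                  continuous_on {0..T} X2 \<and> volterra_solution \<Gamma> v F G T X2" and t: "t \<in> {0..T}"
    then have c: "continuous_on {0..T} X1" "continuous_on {0..T} X2" by auto
    have s1: "\<forall>t\<in>{0..T}. X1 t = Phi \<Gamma> v F G X1 t" using h vsetup.sol_iff[OF V1 c(1)] by blast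
    have s2: "\<forall>t\<in>{0..T}. X2 t = Phi \<Gamma> v F G X2 t" using h vsetup.sol_iff[OF V1 c(2)] by blast
    show "X1 t = X2 t" by (rule vsetup.uniqueness[OF V1 c]) (use s1 s2 t in auto)
  qed
  have nn: "\<forall>X. continuous_on {0..T} X \<and> volterra_solution \<Gamma> v F G T X
              \<longrightarrow> (\<forall>t\<in>{0..T}. \<forall>i. 0 \<le> X t $ i)"
  proof (intro allI impI ballI)
    fix X t i assume h: "continuous_on {0..T} X \<and> volterra_solution \<Gamma> v F G T X" and t: "t \<in> {0..T}"
    then have cX: "continuous_on {0..T} X" by auto
    have sX: "\<forall>t\<in>{0..T}. X t = Phi \<Gamma> v F G X t" using h vsetup.sol_iff[OF V1 cX] by blast
    define YM where "YM M = (SOME Y. continuous_on {0..T} Y \<and> (\<forall>t\<in>{0..T}. Y t = Phi (\<Gamma>M M) v F G Y t))" for M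
    have YM: "continuous_on {0..T} (YM M) \<and> (\<forall>t\<in>{0..T}. YM M t = Phi (\<Gamma>M M) v F G (YM M) t)" for M
    proof -
      have ex2: "\<exists>Y. continuous_on {0..T} Y \<and> (\<forall>t\<in>{0..T}. Y t = Phi (\<Gamma>M M) v F G Y t)"
        by (rule vsetup.existence[OF V2])
      show ?thesis unfolding YM_def by (rule someI_ex[OF ex2])
    qed
    have Ynn: "0 \<le> YM M t $ i" for M
    proof -
      have "pscheme (\<Gamma>M M) T v F G (YM M)"
        unfolding pscheme_def using PM assms(2-7) YM[of M] unfolding Phi_def by auto
      then show ?thesis using pscheme.X_nonneg t by blast
    qed
    have "approx \<Gamma> \<Gamma>M T \<eta> \<gamma> \<eta>' \<gamma>' v F G X YM"
      unfolding approx_def using V1 V2 L2 cX sX YM by auto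
    then have "(\<lambda>M. YM M t) \<longlonglongrightarrow> X t" using approx.conv t by blast
    then have "(\<lambda>M. YM M t $ i) \<longlonglongrightarrow> X t $ i" by (rule tendsto_vec_nth)
    then show "0 \<le> X t $ i" by (rule LIMSEQ_le_const) (use Ynn in auto)
  qed
  show ?thesis using ex un nn by blast
qed

end
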